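(* Let $\mathbf{2}=\{1,2\}$ with preorder $1\le2$. The structure $\mathcal{X}_{\mathcal{D}(\mathrm{Mem})}=(X,\sqsubseteq,\oplus_1,E_1,\oplus_2,E_2)$ with $\oplus_1=\otimes$, $\oplus_2=\oplus$ and $E_1=E_2=X$ is a $\mathbf{2}$-BI frame.
   Context: Fix a set $\mathrm{Var}$ of variables; values are real numbers. For finite $S\subseteq\mathrm{Var}$, $\mathrm{Mem}[S]$ is the set of maps $S\to\mathbb{R}$, ordered pointwise; $p_A(m)$ is restriction. $\mathcal{D}(Y)$ denotes countably supported probability distributions on $Y$; for $\mu\in\mathcal{D}(\mathrm{Mem}[S])$, $\mathrm{dom}(\mu)=S$ and $\pi_A\mu$ is the marginal on $A$. $X=\bigcup_{S\text{ finite}}\mathcal{D}(\mathrm{Mem}[S])$; $\mu\sqsubseteq\mu'$ iff $\mathrm{dom}(\mu)\subseteq\mathrm{dom}(\mu')$ and $\pi_{\mathrm{dom}(\mu)}\mu'=\mu$. $\mu_1\otimes\mu_2$ is $\emptyset$ if the domains $S,T$ intersect, and otherwise the singleton of $\mu\in\mathcal{D}(\mathrm{Mem}[S\cup T])$ with $\mu(x)=\mu_1(p_Sx)\mu_2(p_Tx)$. A partition is a set of pairwise disjoint nonempty sets; $\mathcal{T}$ coarsens $\mathcal{S}$ if $\bigcup\mathcal{T}=\bigcup\mathcal{S}$ and each element of $\mathcal{T}$ is a union of a subfamily of $\mathcal{S}$. $\mu$ is $\mathcal{S}$-PNA (for a partition $\mathcal{S}$ with $\bigcup\mathcal{S}\subseteq\mathrm{dom}(\mu)$)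 if for every $\mathcal{T}$ coarsening $\mathcal{S}$ and every family $(f_A:\mathrm{Mem}[A]\to[0,\infty))_{A\in\mathcal{T}}$ all non-decreasing or all non-increasing, $\mathbb{E}_{m\sim\mu}[\prod_Af_A(p_Am)]\le\prod_A\mathbb{E}_{m\sim\mu}[f_A(p_Am)]$. $\mu_1\oplus\mu_2$ is empty if the domains $S,T$ intersect, and otherwise the set of $\mu\in\mathcal{D}(\mathrm{Mem}[S\cup T])$ with $\pi_S\mu=\mu_1$, $\pi_T\mu=\mu_2$ that are $(\mathcal{S}\cup\mathcal{T})$-PNA for all partitions $\mathcal{S}$ of a subset of $S$ and $\mathcal{T}$ of a subset of $T$ with $\mu_1$ $\mathcal{S}$-PNA and $\mu_2$ $\mathcal{T}$-PNA. A (down-closed) BI frame $(X,\sqsubseteq,\oplus,E)$ requires: (Down-Closed) $z\in x\oplus y$, $x'\sqsubseteq x$, $y'\sqsubseteq y$ imply some $z'\sqsubseteq z$ with $z'\in x'\oplus y'$; (Commutativity) $z\in x\oplus y\Rightarrow z\in y\oplus x$; (Associativity) $w\in t\oplus z$, $t\in x\oplus y$ imply some $s\in y\oplus z$ with $w\in x\oplus s$; (Unit Existence) each $x$ has $e\in E$ with $x\in e\oplus x$; (Unit Coherence) $e\in E$, $x\in y\oplus e\Rightarrow y\sqsubseteq x$; (Unit Closure) $e\in E$, $e\sqsubseteq e'\Rightarrow e'\in E$. For a preorder $(M,\le)$, an $M$-BI frame is $(X,\sqsubseteq,(\oplus_m),(E_m))$ with each component a BI frame and $m_1\le m_2\Rightarrow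 x\oplus_{m_1}y\subseteq x\oplus_{m_2}y$. *)

theory Defs
  imports "HOL-Probability.Probability_Mass_Function"
begin

definition Mem :: "'v set \<Rightarrow> ('v \<rightharpoonup> real) set" where
  "Mem S = {m. dom m = S}"

definition mem_le :: "'v set \<Rightarrow> ('v \<rightharpoonup> real) \<Rightarrow> ('v \<rightharpoonup> real) \<Rightarrow> bool" where
  "mem_le A m m' = (\<forall>x\<in>A. the (m x) \<le> the (m' x))"

text \<open>D(Mem[S]): countably supported distributions (pmfs always have countable support).\<close>
definition Dist :: "'v set \<Rightarrow> ('v \<rightharpoonup> real) pmf set" where
  "Dist S = {\<mu>. set_pmf \<mu> \<subseteq> Mem S}"

definition Xcar :: "('v \<rightharpoonup> real) pmf set" where
  "Xcar = {\<mu>. \<exists>S. finite S \<and> \<mu> \<in> Dist S}"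

definition ddom :: "('v \<rightharpoonup> real) pmf \<Rightarrow> 'v set" where
  "ddom \<mu> = (THE S. \<mu> \<in> Dist S)"

definition marg :: "'v set \<Rightarrow> ('v \<rightharpoonup> real) pmf \<Rightarrow> ('v \<rightharpoonup> real) pmf" where
  "marg A \<mu> = map_pmf (\<lambda>m. m |` A) \<mu>"

definition dle :: "('v \<rightharpoonup> real) pmf \<Rightarrow> ('v \<rightharpoonup> real) pmf \<Rightarrow> bool" where
  "dle \<mu> \<mu>' = (ddom \<mu> \<subseteq> ddom \<mu>' \<and> marg (ddom \<mu>) \<mu>' = \<mu>)"

definition tensor :: "('v \<rightharpoonup> real) pmf \<Rightarrow> ('v \<rightharpoonup> real) pmf \<Rightarrow> ('v \<rightharpoonup> real) pmf set" where
  "tensor \<mu>1 \<mu>2 = (if ddom \<mu>1 \<inter> ddom \<mu>2 \<noteq> {} then {} else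
     {\<mu> \<in> Dist (ddom \<mu>1 \<union> ddom \<mu>2).
        \<forall>x\<in>Mem (ddom \<mu>1 \<union> ddom \<mu>2).
          pmf \<mu> x = pmf \<mu>1 (x |` ddom \<mu>1) * pmf \<mu>2 (x |` ddom \<mu>2)})"

definition is_partition :: "'v set set \<Rightarrow> bool" where
  "is_partition P = ((\<forall>A\<in>P. A \<noteq> {}) \<and> (\<forall>A\<in>P. \<forall>B\<in>P. A \<noteq> B \<longrightarrow> A \<inter> B = {}))"

definition coarsens :: "'v set set \<Rightarrow> 'v set set \<Rightarrow> bool" where
  "coarsens T S = (\<Union>T = \<Union>S \<and> (\<forall>A\<in>T. \<exists>F\<subseteq>S. A = \<Union>F))"

definition nondecr_on_Mem :: "'v set \<Rightarrow> (('v \<rightharpoonup> real) \<Rightarrow> real) \<Rightarrow> bool" where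
  "nondecr_on_Mem A f = (\<forall>m\<in>Mem A. \<forall>m'\<in>Mem A. mem_le A m m' \<longrightarrow> f m \<le> f m')"

definition nonincr_on_Mem :: "'v set \<Rightarrow> (('v \<rightharpoonup> real) \<Rightarrow> real) \<Rightarrow> bool" where
  "nonincr_on_Mem A f = (\<forall>m\<in>Mem A. \<forall>m'\<in>Mem A. mem_le A m m' \<longrightarrow> f m' \<le> f m)"

definition PNA :: "'v set set \<Rightarrow> ('v \<rightharpoonup> real) pmf \<Rightarrow> bool" where
  "PNA S \<mu> = (is_partition S \<and> \<Union>S \<subseteq> ddom \<mu> \<and>
     (\<forall>T f. is_partition T \<and> coarsens T S \<and>
        (\<forall>A\<in>T. \<forall>m\<in>Mem A. 0 \<le> f A m) \<and>
        ((\<forall>A\<in>T. nondecr_on_Mem A (f A)) \<or> (\<forall>A\<in>T. nonincr_on_Mem A (f A))) \<longrightarrow>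
        (\<integral>\<^sup>+ m. (\<Prod>A\<in>T. ennreal (f A (m |` A))) \<partial>measure_pmf \<mu>)
          \<le> (\<Prod>A\<in>T. \<integral>\<^sup>+ m. ennreal (f A (m |` A)) \<partial>measure_pmf \<mu>)))"

definition noplus :: "('v \<rightharpoonup> real) pmf \<Rightarrow> ('v \<rightharpoonup> real) pmf \<Rightarrow> ('v \<rightharpoonup> real) pmf set" where
  "noplus \<mu>1 \<mu>2 = (if ddom \<mu>1 \<inter> ddom \<mu>2 \<noteq> {} then {} else
     {\<mu> \<in> Dist (ddom \<mu>1 \<union> ddom \<mu>2).
        marg (ddom \<mu>1) \<mu> = \<mu>1 \<and> marg (ddom \<mu>2) \<mu> = \<mu>2 \<and>
        (\<forall>P Q. is_partition P \<and> \<Union>P \<subseteq> ddom \<mu>1 \<and> is_partition Q \<and> \<Union>Q \<subseteq> ddom \<mu>2 \<and>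
               PNA P \<mu>1 \<and> PNA Q \<mu>2 \<longrightarrow> PNA (P \<union> Q) \<mu>)})"

definition BI_frame :: "'a set \<Rightarrow> ('a \<Rightarrow> 'a \<Rightarrow> bool) \<Rightarrow> ('a \<Rightarrow> 'a \<Rightarrow> 'a set) \<Rightarrow> 'a set \<Rightarrow> bool" where
  "BI_frame X le op E = (
     (\<forall>x\<in>X. le x x) \<and>
     (\<forall>x\<in>X. \<forall>y\<in>X. \<forall>z\<in>X. le x y \<longrightarrow> le y z \<longrightarrow> le x z) \<and>
     (\<forall>x\<in>X. \<forall>y\<in>X. op x y \<subseteq> X) \<and> E \<subseteq> X \<and>
     (\<forall>x\<in>X. \<forall>y\<in>X. \<forall>z\<in>X. \<forall>x'\<in>X. \<forall>y'\<in>X.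
        z \<in> op x y \<longrightarrow> le x' x \<longrightarrow> le y' y \<longrightarrow> (\<exists>z'\<in>X. le z' z \<and> z' \<in> op x' y')) \<and>
     (\<forall>x\<in>X. \<forall>y\<in>X. \<forall>z\<in>X. z \<in> op x y \<longrightarrow> z \<in> op y x) \<and>
     (\<forall>x\<in>X. \<forall>y\<in>X. \<forall>z\<in>X. \<forall>t\<in>X. \<forall>w\<in>X.
        w \<in> op t z \<longrightarrow> t \<in> op x y \<longrightarrow> (\<exists>s\<in>X. s \<in> op y z \<and> w \<in> op x s)) \<and>
     (\<forall>x\<in>X. \<exists>e\<in>E. x \<in> op e x) \<and>
     (\<forall>e\<in>E. \<forall>x\<in>X. \<forall>y\<in>X. x \<in> op y e \<longrightarrow> le y x) \<and>
     (\<forall>e\<in>E. \<forall>e'\<in>X. le e e' \<longrightarrow> e' \<in> E))"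

definition M_BI_frame :: "'m set \<Rightarrow> ('m \<Rightarrow> 'm \<Rightarrow> bool) \<Rightarrow> 'a set \<Rightarrow> ('a \<Rightarrow> 'a \<Rightarrow> bool)
    \<Rightarrow> ('m \<Rightarrow> 'a \<Rightarrow> 'a \<Rightarrow> 'a set) \<Rightarrow> ('m \<Rightarrow> 'a set) \<Rightarrow> bool" where
  "M_BI_frame M leM X le op E = (
     (\<forall>m\<in>M. BI_frame X le (op m) (E m)) \<and>
     (\<forall>m1\<in>M. \<forall>m2\<in>M. leM m1 m2 \<longrightarrow> (\<forall>x\<in>X. \<forall>y\<in>X. op m1 x y \<subseteq> op m2 x y)))"

end

theory Submission
  imports Defs
begin


lemma Mem_iff: "m \<in> Mem S \<longleftrightarrow> dom m = S" by (simp add: Mem_def)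

lemma Dist_ddom: assumes "\<mu> \<in> Dist S" shows "ddom \<mu> = S"
proof -
  obtain m where m: "m \<in> set_pmf \<mu>" using set_pmf_not_empty[of \<mu>] by blast
  have "\<And>S'. \<mu> \<in> Dist S' \<Longrightarrow> S' = S"
    using m assms by (auto simp: Dist_def Mem_def)
  then show ?thesis unfolding ddom_def using assms by (rule the_equality[rotated])
qed

lemma Dist_D: "\<mu> \<in> Dist S \<Longrightarrow> m \<in> set_pmf \<mu> \<Longrightarrow> dom m = S"
  by (auto simp: Dist_def Mem_def)

lemma Xcar_iff: "\<mu> \<in> Xcar \<longleftrightarrow> finite (ddom \<mu>) \<and> \<mu> \<in> Dist (ddom \<mu>)"
  unfolding Xcar_def using Dist_ddom by blast

lemma XcarD: "\<mu> \<in> Xcar \<Longrightarrow> \<mu> \<in> Dist (ddom \<mu>)" by (simp add: Xcar_iff)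
lemma XcarD2: "\<mu> \<in> Xcar \<Longrightarrow> finite (ddom \<mu>)" by (simp add: Xcar_iff)

lemma marg_Dist: "\<mu> \<in> Dist S \<Longrightarrow> marg A \<mu> \<in> Dist (S \<inter> A)"
proof -
  assume "\<mu> \<in> Dist S"
  then have "\<And>m. m \<in> set_pmf \<mu> \<Longrightarrow> dom (m |` A) = S \<inter> A" using Dist_D by auto
  then show ?thesis unfolding Dist_def Mem_def marg_def by (simp only: mem_Collect_eq set_map_pmf image_subset_iff) (auto simp del: dom_restrict)
qed

lemma marg_marg: "marg A (marg B \<mu>) = marg (B \<inter> A) \<mu>"
  by (simp add: marg_def map_pmf_comp)

lemma restrict_dom_self: "dom m = S \<Longrightarrow> m |` S = m"
  by (rule ext) (auto simp: restrict_map_def)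

lemma marg_self: "\<mu> \<in> Dist S \<Longrightarrow> marg S \<mu> = \<mu>"
  unfolding marg_def
  by (subst map_pmf_cong[where g="\<lambda>x. x", OF refl]) (auto dest: Dist_D intro: restrict_dom_self)

lemma marg_sup: "\<mu> \<in> Dist S \<Longrightarrow> S \<subseteq> A \<Longrightarrow> marg A \<mu> = \<mu>"
proof -
  assume a: "\<mu> \<in> Dist S" "S \<subseteq> A"
  have "marg A \<mu> = marg A (marg S \<mu>)" using marg_self[OF a(1)] by simp
  also have "\<dots> = marg S \<mu>" using a(2) by (simp add: marg_marg Int_absorb2)
  finally show ?thesis using marg_self[OF a(1)] by simp
qed

lemma Xcar_marg: "\<mu> \<in> Xcar \<Longrightarrow> marg A \<mu> \<in> Xcar \<and> ddom (marg A \<mu>) = ddom \<mu> \<inter> A"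
  using marg_Dist[OF XcarD] Dist_ddom XcarD2 unfolding Xcar_def by blast

lemma dle_refl: "\<mu> \<in> Xcar \<Longrightarrow> dle \<mu> \<mu>"
  by (simp add: dle_def marg_self XcarD)

lemma dle_trans: "\<mu>1 \<in> Xcar \<Longrightarrow> \<mu>2 \<in> Xcar \<Longrightarrow> dle \<mu>1 \<mu>2 \<Longrightarrow> dle \<mu>2 \<mu>3 \<Longrightarrow> dle \<mu>1 \<mu>3"
  unfolding dle_def by (metis marg_marg inf.absorb_iff2 order_trans)

lemma dle_marg: "\<mu> \<in> Xcar \<Longrightarrow> A \<subseteq> ddom \<mu> \<Longrightarrow> dle (marg A \<mu>) \<mu>"
  unfolding dle_def using Xcar_marg by (metis Int_absorb1 inf_le1)

lemma map_add_restrict1: "dom a = S \<Longrightarrow> dom b = T \<Longrightarrow> S \<inter> T = {} \<Longrightarrow> (a ++ b) |` S = a"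
  by (rule ext) (auto simp: restrict_map_def map_add_def dom_def split: option.split)
lemma map_add_restrict2: "dom a = S \<Longrightarrow> dom b = T \<Longrightarrow> S \<inter> T = {} \<Longrightarrow> (a ++ b) |` T = b"
  by (rule ext) (auto simp: restrict_map_def map_add_def dom_def split: option.split)
lemma map_add_split: "dom m = S \<union> T \<Longrightarrow> (m |` S) ++ (m |` T) = m"
  by (rule ext) (auto simp: restrict_map_def map_add_def dom_def split: option.split)

definition pprod :: "('v \<rightharpoonup> real) pmf \<Rightarrow> ('v \<rightharpoonup> real) pmf \<Rightarrow> ('v \<rightharpoonup> real) pmf" where
  "pprod x y = map_pmf (\<lambda>(a,b). a ++ b) (pair_pmf x y)"

lemma pprod_Dist: "x \<in> Dist S \<Longrightarrow> y \<in> Dist T \<Longrightarrow> pprod x y \<in> Dist (S \<union> T)"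
proof -
  assume "x \<in> Dist S" "y \<in> Dist T"
  then have "\<And>a b. a \<in> set_pmf x \<Longrightarrow> b \<in> set_pmf y \<Longrightarrow> dom (a ++ b) = S \<union> T" using Dist_D by auto
  then show ?thesis unfolding pprod_def Dist_def Mem_def by (simp only: mem_Collect_eq set_map_pmf set_pair_pmf image_subset_iff) (auto simp del: dom_map_add)
qed

lemma pmf_pprod: assumes "x \<in> Dist S" "y \<in> Dist T" "S \<inter> T = {}" "z \<in> Mem (S \<union> T)"
  shows "pmf (pprod x y) z = pmf x (z |` S) * pmf y (z |` T)"
proof -
  let ?f = "\<lambda>(a,b). (a::'a\<rightharpoonup>real) ++ b"
  have "(?f -` {z}) \<inter> set_pmf (pair_pmf x y) = {(z |` S, z |` T)} \<inter> set_pmf (pair_pmf x y)"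
  proof (intro equalityI subsetI)
    fix p assume p: "p \<in> (?f -` {z}) \<inter> set_pmf (pair_pmf x y)"
    obtain a b where ab: "p = (a,b)" by (cases p)
    have "dom a = S" "dom b = T" using p ab Dist_D[OF assms(1)] Dist_D[OF assms(2)] by auto
    moreover have "z = a ++ b" using p ab by auto
    ultimately have "a = z |` S" "b = z |` T" using map_add_restrict1 map_add_restrict2 assms(3) by metis+
    then show "p \<in> {(z |` S, z |` T)} \<inter> set_pmf (pair_pmf x y)" using p ab by auto
  next
    fix p assume p: "p \<in> {(z |` S, z |` T)} \<inter> set_pmf (pair_pmf x y)"
    have "dom z = S \<union> T" using assms(4) by (simp add: Mem_def)
    then have "?f p = z" using p map_add_split[of z S T] by auto
    then show "p \<in> (?f -` {z}) \<inter> set_pmf (pair_pmf x y)" using p by auto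
  qed
  then have "pmf (pprod x y) z = measure (pair_pmf x y) {(z |` S, z |` T)}"
    unfolding pprod_def pmf_map by (metis measure_Int_set_pmf)
  then show ?thesis by (simp add: measure_pmf_single pmf_pair)
qed

lemma tensor_eq: assumes "x \<in> Dist S" "y \<in> Dist T" "S \<inter> T = {}"
  shows "tensor x y = {pprod x y}"
proof -
  have d: "ddom x = S" "ddom y = T" using assms Dist_ddom by auto
  have "\<mu> = pprod x y" if "\<mu> \<in> Dist (S \<union> T)" "\<forall>z\<in>Mem (S \<union> T). pmf \<mu> z = pmf x (z |` S) * pmf y (z |` T)" for \<mu>
  proof (rule pmf_eqI)
    fix z show "pmf \<mu> z = pmf (pprod x y) z"
    proof (cases "z \<in> Mem (S \<union> T)")
      case True then show ?thesis using that pmf_pprod[OF assms True] by simp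
    next
      case False
      then have "z \<notin> set_pmf \<mu>" "z \<notin> set_pmf (pprod x y)" using that pprod_Dist[OF assms(1,2)]
        by (auto simp: Dist_def)
      then show ?thesis by (simp add: set_pmf_eq)
    qed
  qed
  moreover have "tensor x y = {\<mu> \<in> Dist (S \<union> T). \<forall>z\<in>Mem (S \<union> T). pmf \<mu> z = pmf x (z |` S) * pmf y (z |` T)}"
    unfolding tensor_def d using assms(3) by simp
  moreover have "pprod x y \<in> Dist (S \<union> T)" by (rule pprod_Dist[OF assms(1,2)])
  moreover have "\<forall>z\<in>Mem (S \<union> T). pmf (pprod x y) z = pmf x (z |` S) * pmf y (z |` T)"
    using pmf_pprod[OF assms] by blast
  ultimately show ?thesis by blast
qed

lemma pprod_Xcar: "x \<in> Xcar \<Longrightarrow> y \<in> Xcar \<Longrightarrow> pprod x y \<in> Xcar \<and> ddom (pprod x y) = ddom x \<union> ddom y"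
proof -
  assume a: "x \<in> Xcar" "y \<in> Xcar"
  have d: "pprod x y \<in> Dist (ddom x \<union> ddom y)" by (rule pprod_Dist[OF XcarD[OF a(1)] XcarD[OF a(2)]])
  have "finite (ddom x \<union> ddom y)" using XcarD2 a by blast
  then show ?thesis using d Dist_ddom[OF d] unfolding Xcar_def by blast
qed

lemma marg_pprod1: assumes "x \<in> Dist S" "y \<in> Dist T" "S \<inter> T = {}"
  shows "marg S (pprod x y) = x"
proof -
  have "marg S (pprod x y) = map_pmf fst (pair_pmf x y)"
    unfolding marg_def pprod_def map_pmf_comp
    by (rule map_pmf_cong) (use assms Dist_D[OF assms(1)] Dist_D[OF assms(2)] in \<open>auto simp: map_add_restrict1\<close>)
  then show ?thesis by (simp add: map_fst_pair_pmf)
qed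

lemma marg_pprod2: assumes "x \<in> Dist S" "y \<in> Dist T" "S \<inter> T = {}"
  shows "marg T (pprod x y) = y"
proof -
  have "marg T (pprod x y) = map_pmf snd (pair_pmf x y)"
    unfolding marg_def pprod_def map_pmf_comp
    by (rule map_pmf_cong) (use assms Dist_D[OF assms(1)] Dist_D[OF assms(2)] in \<open>auto simp: map_add_restrict2\<close>)
  then show ?thesis by (simp add: map_snd_pair_pmf)
qed

lemma marg_pprod: assumes "x \<in> Dist S" "y \<in> Dist T" "S \<inter> T = {}" "S' \<subseteq> S" "T' \<subseteq> T"
  shows "marg (S' \<union> T') (pprod x y) = pprod (marg S' x) (marg T' y)"
proof -
  have "marg (S' \<union> T') (pprod x y) = map_pmf (\<lambda>(a,b). a ++ b) (map_pmf (\<lambda>(a,b). (a|`S', b|`T')) (pair_pmf x y))"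
    unfolding marg_def pprod_def map_pmf_comp
  proof (rule map_pmf_cong[OF refl], clarify)
    fix a b assume "(a, b) \<in> set_pmf (pair_pmf x y)"
    then have "dom a = S" "dom b = T" using Dist_D[OF assms(1)] Dist_D[OF assms(2)] by auto
    then show "(a ++ b) |` (S' \<union> T') = a |` S' ++ b |` T'"
    proof (intro ext)
      fix v
      have "v \<in> S' \<Longrightarrow> b v = None" using assms(3,4) \<open>dom b = T\<close> by blast
      moreover have "v \<in> T' \<Longrightarrow> v \<in> dom b" using assms(5) \<open>dom b = T\<close> by blast
      ultimately show "((a ++ b) |` (S' \<union> T')) v = (a |` S' ++ b |` T') v"
        by (auto simp: restrict_map_def map_add_def split: option.split)
    qed
  qed
  then show ?thesis by (simp add: map_pair pprod_def marg_def)
qed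


definition adm :: "'v set set \<Rightarrow> ('v set \<Rightarrow> ('v \<rightharpoonup> real) \<Rightarrow> real) \<Rightarrow> bool" where
  "adm T f = ((\<forall>A\<in>T. \<forall>m\<in>Mem A. 0 \<le> f A m) \<and>
        ((\<forall>A\<in>T. nondecr_on_Mem A (f A)) \<or> (\<forall>A\<in>T. nonincr_on_Mem A (f A))))"

lemma PNA_alt: "PNA S \<mu> = (is_partition S \<and> \<Union>S \<subseteq> ddom \<mu> \<and>
     (\<forall>T f. is_partition T \<and> coarsens T S \<and> adm T f \<longrightarrow>
        (\<integral>\<^sup>+ m. (\<Prod>A\<in>T. ennreal (f A (m |` A))) \<partial>measure_pmf \<mu>)
          \<le> (\<Prod>A\<in>T. \<integral>\<^sup>+ m. ennreal (f A (m |` A)) \<partial>measure_pmf \<mu>)))"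
  unfolding PNA_def adm_def conj_assoc by (rule refl)

lemma nn_int_cong_pmf: "(\<And>m. m \<in> set_pmf \<mu> \<Longrightarrow> F m = G m) \<Longrightarrow>
   (\<integral>\<^sup>+ m. F m \<partial>measure_pmf \<mu>) = (\<integral>\<^sup>+ m. G m \<partial>measure_pmf \<mu>)"
  by (rule nn_integral_cong_AE) (simp add: AE_pmfI)

lemma nn_int_mono_pmf: "(\<And>m. m \<in> set_pmf \<mu> \<Longrightarrow> F m \<le> G m) \<Longrightarrow>
   (\<integral>\<^sup>+ m. F m \<partial>measure_pmf \<mu>) \<le> (\<integral>\<^sup>+ m. G m \<partial>measure_pmf \<mu>)"
  by (rule nn_integral_mono_AE) (simp add: AE_pmfI)

lemma nn_int_const_pmf: "(\<integral>\<^sup>+ m. c \<partial>measure_pmf \<mu>) = c"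
  by (simp add: nn_integral_const emeasure_pmf)

lemma partition_finite: "is_partition P \<Longrightarrow> finite (\<Union>P) \<Longrightarrow> finite P"
  by (rule finite_subset[of P "Pow (\<Union>P)"]) auto

lemma marg_integral: "(\<integral>\<^sup>+ m. F m \<partial>measure_pmf (marg D \<mu>)) = (\<integral>\<^sup>+ m. F (m |` D) \<partial>measure_pmf \<mu>)"
  by (simp add: marg_def)

lemma coarsensD1: "coarsens T S \<Longrightarrow> \<Union>T = \<Union>S" unfolding coarsens_def by (elim conjE)
lemma coarsensD2: "coarsens T S \<Longrightarrow> A \<in> T \<Longrightarrow> \<exists>F\<subseteq>S. A = \<Union>F" unfolding coarsens_def by (elim conjE) simp
lemma coarsensI: "\<Union>T = \<Union>S \<Longrightarrow> (\<And>A. A \<in> T \<Longrightarrow> \<exists>F\<subseteq>S. A = \<Union>F) \<Longrightarrow> coarsens T S"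
  unfolding coarsens_def by simp
lemma PNA_marg_iff:
  assumes "\<mu> \<in> Xcar" "D \<subseteq> ddom \<mu>" "\<Union>P \<subseteq> D"
  shows "PNA P (marg D \<mu>) \<longleftrightarrow> PNA P \<mu>"
proof -
  have dd: "ddom (marg D \<mu>) = D" using Xcar_marg[OF assms(1)] assms(2) by auto
  have eq: "(\<integral>\<^sup>+ m. (\<Prod>A\<in>T. ennreal (f A (m |` A))) \<partial>measure_pmf (marg D \<mu>))
         = (\<integral>\<^sup>+ m. (\<Prod>A\<in>T. ennreal (f A (m |` A))) \<partial>measure_pmf \<mu>)"
      "(\<Prod>A\<in>T. \<integral>\<^sup>+ m. ennreal (f A (m |` A)) \<partial>measure_pmf (marg D \<mu>))
         = (\<Prod>A\<in>T. \<integral>\<^sup>+ m. ennreal (f A (m |` A)) \<partial>measure_pmf \<mu>)"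
    if "coarsens T P" for T f
  proof -
    have sub: "\<And>A. A \<in> T \<Longrightarrow> D \<inter> A = A" using coarsensD1[OF that] assms(3) by auto
    show "(\<integral>\<^sup>+ m. (\<Prod>A\<in>T. ennreal (f A (m |` A))) \<partial>measure_pmf (marg D \<mu>))
         = (\<integral>\<^sup>+ m. (\<Prod>A\<in>T. ennreal (f A (m |` A))) \<partial>measure_pmf \<mu>)"
      unfolding marg_integral by (intro nn_integral_cong prod.cong refl) (simp add: sub)
    show "(\<Prod>A\<in>T. \<integral>\<^sup>+ m. ennreal (f A (m |` A)) \<partial>measure_pmf (marg D \<mu>))
         = (\<Prod>A\<in>T. \<integral>\<^sup>+ m. ennreal (f A (m |` A)) \<partial>measure_pmf \<mu>)"
      unfolding marg_integral by (intro nn_integral_cong prod.cong refl) (simp add: sub)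
  qed
  have "\<Union>P \<subseteq> ddom \<mu>" using assms(2,3) by blast
  moreover have "(\<forall>T f. is_partition T \<and> coarsens T P \<and> adm T f \<longrightarrow>
        (\<integral>\<^sup>+ m. (\<Prod>A\<in>T. ennreal (f A (m |` A))) \<partial>measure_pmf (marg D \<mu>))
          \<le> (\<Prod>A\<in>T. \<integral>\<^sup>+ m. ennreal (f A (m |` A)) \<partial>measure_pmf (marg D \<mu>)))
     \<longleftrightarrow> (\<forall>T f. is_partition T \<and> coarsens T P \<and> adm T f \<longrightarrow>
        (\<integral>\<^sup>+ m. (\<Prod>A\<in>T. ennreal (f A (m |` A))) \<partial>measure_pmf \<mu>)
          \<le> (\<Prod>A\<in>T. \<integral>\<^sup>+ m. ennreal (f A (m |` A)) \<partial>measure_pmf \<mu>))"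
  proof (intro iffI allI impI)
    fix T f assume h: "\<forall>T f. is_partition T \<and> coarsens T P \<and> adm T f \<longrightarrow>
        (\<integral>\<^sup>+ m. (\<Prod>A\<in>T. ennreal (f A (m |` A))) \<partial>measure_pmf (marg D \<mu>))
          \<le> (\<Prod>A\<in>T. \<integral>\<^sup>+ m. ennreal (f A (m |` A)) \<partial>measure_pmf (marg D \<mu>))"
      and c: "is_partition T \<and> coarsens T P \<and> adm T f"
    then show "(\<integral>\<^sup>+ m. (\<Prod>A\<in>T. ennreal (f A (m |` A))) \<partial>measure_pmf \<mu>)
          \<le> (\<Prod>A\<in>T. \<integral>\<^sup>+ m. ennreal (f A (m |` A)) \<partial>measure_pmf \<mu>)"
    proof -
      note le = mp[OF spec[OF spec[OF h, of T], of f] c]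
      have co: "coarsens T P" using c by simp
      show ?thesis using le eq[OF co, of f] by simp
    qed
  next
    fix T f assume h: "\<forall>T f. is_partition T \<and> coarsens T P \<and> adm T f \<longrightarrow>
        (\<integral>\<^sup>+ m. (\<Prod>A\<in>T. ennreal (f A (m |` A))) \<partial>measure_pmf \<mu>)
          \<le> (\<Prod>A\<in>T. \<integral>\<^sup>+ m. ennreal (f A (m |` A)) \<partial>measure_pmf \<mu>)"
      and c: "is_partition T \<and> coarsens T P \<and> adm T f"
    then show "(\<integral>\<^sup>+ m. (\<Prod>A\<in>T. ennreal (f A (m |` A))) \<partial>measure_pmf (marg D \<mu>))
          \<le> (\<Prod>A\<in>T. \<integral>\<^sup>+ m. ennreal (f A (m |` A)) \<partial>measure_pmf (marg D \<mu>))"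
    proof -
      note le = mp[OF spec[OF spec[OF h, of T], of f] c]
      have co: "coarsens T P" using c by simp
      show ?thesis using le eq[OF co, of f] by simp
    qed
  qed
  ultimately show ?thesis unfolding PNA_alt dd using assms(3) by blast
qed

lemma coarsens_trans: "coarsens T S \<Longrightarrow> coarsens S R \<Longrightarrow> coarsens T R"
proof -
  assume a: "coarsens T S" "coarsens S R"
  show ?thesis
  proof (rule coarsensI)
    show "\<Union>T = \<Union>R" using coarsensD1[OF a(1)] coarsensD1[OF a(2)] by simp
    fix A assume "A \<in> T"
    then obtain G where G: "G \<subseteq> S" "A = \<Union>G" using coarsensD2[OF a(1)] by blast
    have "A \<subseteq> \<Union>{B\<in>R. B \<subseteq> A}"
    proof
      fix v assume "v \<in> A"
      then obtain C where C: "C \<in> G" "v \<in> C" using G(2) by auto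
      then have "C \<in> S" using G(1) by auto
      then obtain F where F: "F \<subseteq> R" "C = \<Union>F" using coarsensD2[OF a(2)] by blast
      then obtain B where B: "B \<in> F" "v \<in> B" using C(2) by auto
      have "B \<subseteq> C" using B(1) F(2) by auto
      moreover have "C \<subseteq> A" using C(1) G(2) by auto
      ultimately have "B \<subseteq> A" by (rule order_trans)
      then show "v \<in> \<Union>{B\<in>R. B \<subseteq> A}" using B F(1) by auto
    qed
    then have "A = \<Union>{B\<in>R. B \<subseteq> A}" by auto
    then show "\<exists>F\<subseteq>R. A = \<Union>F" by (intro exI[of _ "{B\<in>R. B \<subseteq> A}"]) auto
  qed
qed

lemma PNA_D: "PNA S \<mu> \<Longrightarrow> is_partition T \<Longrightarrow> coarsens T S \<Longrightarrow> adm T f \<Longrightarrow>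
   (\<integral>\<^sup>+ m. (\<Prod>A\<in>T. ennreal (f A (m |` A))) \<partial>measure_pmf \<mu>)
          \<le> (\<Prod>A\<in>T. \<integral>\<^sup>+ m. ennreal (f A (m |` A)) \<partial>measure_pmf \<mu>)"
  unfolding PNA_alt by (elim conjE allE[of _ T] allE[of _ f] impE) auto

lemma PNA_D2: "PNA S \<mu> \<Longrightarrow> is_partition S \<and> \<Union>S \<subseteq> ddom \<mu>"
  unfolding PNA_alt by (elim conjE) auto

lemma PNA_coarsen: "PNA S \<mu> \<Longrightarrow> is_partition S' \<Longrightarrow> coarsens S' S \<Longrightarrow> PNA S' \<mu>"
proof -
  assume a: "PNA S \<mu>" "is_partition S'" "coarsens S' S"
  have u: "\<Union>S' = \<Union>S" using coarsensD1[OF a(3)] .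
  show ?thesis unfolding PNA_alt
  proof (intro conjI allI impI)
    show "is_partition S'" by fact
    show "\<Union>S' \<subseteq> ddom \<mu>" using PNA_D2[OF a(1)] u by simp
    fix T f assume "is_partition T \<and> coarsens T S' \<and> adm T f"
    then have "is_partition T" "coarsens T S" "adm T f" using coarsens_trans[OF _ a(3)] by auto
    then show "(\<integral>\<^sup>+ m. (\<Prod>A\<in>T. ennreal (f A (m |` A))) \<partial>measure_pmf \<mu>)
          \<le> (\<Prod>A\<in>T. \<integral>\<^sup>+ m. ennreal (f A (m |` A)) \<partial>measure_pmf \<mu>)"
      using PNA_D[OF a(1)] by blast
  qed
qed

lemma partition_empty_only: "is_partition T \<Longrightarrow> \<Union>T = {} \<Longrightarrow> T = {}"
  unfolding is_partition_def by auto

lemma PNA_empty: "\<mu> \<in> Xcar \<Longrightarrow> PNA {} \<mu>"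
proof -
  have "T = {}" if "is_partition T" "coarsens T {}" for T :: "'a set set"
    using partition_empty_only[OF that(1)] coarsensD1[OF that(2)] by simp
  moreover have "is_partition ({}::'a set set)" by (simp add: is_partition_def)
  ultimately show ?thesis unfolding PNA_alt
  proof (intro conjI allI impI)
    fix T :: "'a set set" and f assume "is_partition T \<and> coarsens T {} \<and> adm T f"
    then have "T = {}" using partition_empty_only[of T] coarsensD1[of T "{}"] by simp
    then show "(\<integral>\<^sup>+ m. (\<Prod>A\<in>T. ennreal (f A (m |` A))) \<partial>measure_pmf \<mu>)
          \<le> (\<Prod>A\<in>T. \<integral>\<^sup>+ m. ennreal (f A (m |` A)) \<partial>measure_pmf \<mu>)"
      by (simp add: nn_int_const_pmf)
  qed (simp_all add: \<open>is_partition {}\<close>)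
qed


lemma partitionD: "is_partition P \<Longrightarrow> A \<in> P \<Longrightarrow> B \<in> P \<Longrightarrow> A \<noteq> B \<Longrightarrow> A \<inter> B = {}"
  unfolding is_partition_def by auto
lemma partitionD': "is_partition P \<Longrightarrow> A \<in> P \<Longrightarrow> B \<in> P \<Longrightarrow> v \<in> A \<Longrightarrow> v \<in> B \<Longrightarrow> A = B"
  unfolding is_partition_def by auto
lemma partition_ne: "is_partition P \<Longrightarrow> A \<in> P \<Longrightarrow> A \<noteq> {}"
  unfolding is_partition_def by auto
lemma partitionI: "(\<And>A. A \<in> P \<Longrightarrow> A \<noteq> {}) \<Longrightarrow> (\<And>A B v. A \<in> P \<Longrightarrow> B \<in> P \<Longrightarrow> v \<in> A \<Longrightarrow> v \<in> B \<Longrightarrow> A = B) \<Longrightarrow> is_partition P"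
  unfolding is_partition_def by auto

lemma mem_le_restrict: "mem_le A m m' \<Longrightarrow> C \<subseteq> A \<Longrightarrow> mem_le C (m |` C) (m' |` C)"
  unfolding mem_le_def by auto

lemma Mem_restrict: "m \<in> Mem A \<Longrightarrow> C \<subseteq> A \<Longrightarrow> m |` C \<in> Mem C"
  unfolding Mem_def by auto

lemma PNA_split:
  assumes pna: "PNA Q \<mu>" and X: "\<mu> \<in> Xcar"
  shows "PNA ((\<lambda>B. B \<inter> Y) ` {B\<in>Q. B \<inter> Y \<noteq> {}}) \<mu>"
proof -
  let ?Q1 = "{B\<in>Q. B \<inter> Y \<noteq> {}}" and ?Q0 = "{B\<in>Q. B \<inter> Y = {}}"
  let ?QY = "(\<lambda>B. B \<inter> Y) ` ?Q1"
  have Qp: "is_partition Q" and Qd: "\<Union>Q \<subseteq> ddom \<mu>" using PNA_D2[OF pna] by auto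
  have "finite (\<Union>Q)" using Qd XcarD2[OF X] by (rule finite_subset)
  then have finQ: "finite Q" using partition_finite[OF Qp] by simp
  have QYp: "is_partition ?QY"
  proof (rule partitionI)
    fix A assume "A \<in> ?QY" then show "A \<noteq> {}" by auto
  next
    fix A B v assume "A \<in> ?QY" "B \<in> ?QY" "v \<in> A" "v \<in> B"
    then obtain BA BB where "BA \<in> Q" "BB \<in> Q" "A = BA \<inter> Y" "B = BB \<inter> Y" by auto
    then show "A = B" using partitionD'[OF Qp, of BA BB v] \<open>v \<in> A\<close> \<open>v \<in> B\<close> by auto
  qed
  have QYd: "\<Union>?QY \<subseteq> ddom \<mu>" using Qd by auto
  show ?thesis unfolding PNA_alt
  proof (intro conjI allI impI)
    show "is_partition ?QY" by fact
    show "\<Union>?QY \<subseteq> ddom \<mu>" by fact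
    fix T' f' assume "is_partition T' \<and> coarsens T' ?QY \<and> adm T' f'"
    then have T'p: "is_partition T'" and T'c: "coarsens T' ?QY" and T'a: "adm T' f'" by auto
    have "finite (\<Union>?QY)" using QYd XcarD2[OF X] by (rule finite_subset)
    then have finT': "finite T'" using partition_finite[OF T'p] coarsensD1[OF T'c] by simp
    define lift where "lift C = \<Union>{B\<in>?Q1. B \<inter> Y \<subseteq> C}" for C
    have L1: "lift C \<inter> Y = C" if Cin: "C \<in> T'" for C
    proof
      show "lift C \<inter> Y \<subseteq> C" unfolding lift_def by auto
      show "C \<subseteq> lift C \<inter> Y"
      proof
        fix v assume "v \<in> C"
        obtain F where F: "F \<subseteq> ?QY" "C = \<Union>F" using coarsensD2[OF T'c Cin] by blast
        then obtain D where D: "D \<in> F" "v \<in> D" using \<open>v \<in> C\<close> by auto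
        then obtain B where B: "B \<in> ?Q1" "D = B \<inter> Y" using F(1) by auto
        have "B \<inter> Y \<subseteq> C" using D(1) B(2) F(2) by auto
        then show "v \<in> lift C \<inter> Y" using B D unfolding lift_def by auto
      qed
    qed
    have Cne: "C \<noteq> {}" if "C \<in> T'" for C using partition_ne[OF T'p that] .
    have Csub: "C \<subseteq> lift C" if "C \<in> T'" for C using Int_lower1[of "lift C" Y] unfolding L1[OF that] .
    have inj: "inj_on lift T'"
    proof (rule inj_onI)
      fix C C' assume a: "C \<in> T'" "C' \<in> T'" "lift C = lift C'"
      have "C = lift C \<inter> Y" using L1[OF a(1)] by (rule sym)
      also have "\<dots> = lift C' \<inter> Y" using a(3) by (rule arg_cong)
      also have "\<dots> = C'" using L1[OF a(2)] .
      finally show "C = C'" .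
    qed
    have disj0: "lift ` T' \<inter> ?Q0 = {}"
    proof -
      have "lift C \<notin> ?Q0" if "C \<in> T'" for C
      proof
        assume "lift C \<in> ?Q0"
        then have "lift C \<inter> Y = {}" by simp
        then show False using L1[OF that] Cne[OF that] by simp
      qed
      then show ?thesis by blast
    qed
    let ?T = "lift ` T' \<union> ?Q0"
    have finT: "finite ?T" using finT' finQ by auto
    have liftQ: "lift C \<subseteq> \<Union>Q" for C unfolding lift_def by auto
    have Tp: "is_partition ?T"
    proof (rule partitionI)
      fix A assume "A \<in> ?T"
      then show "A \<noteq> {}"
      proof
        assume "A \<in> lift ` T'"
        then obtain C where C: "C \<in> T'" "A = lift C" by auto
        then show ?thesis using Cne[OF C(1)] Csub[OF C(1)] by auto
      next
        assume "A \<in> ?Q0" then show ?thesis using partition_ne[OF Qp] by auto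
      qed
    next
      fix A B v assume AB: "A \<in> ?T" "B \<in> ?T" "v \<in> A" "v \<in> B"
      have memlift: "\<exists>B'\<in>?Q1. B' \<inter> Y \<subseteq> C \<and> v \<in> B'" if "v \<in> lift C" for C
        using that unfolding lift_def by auto
      show "A = B"
      proof (cases "A \<in> ?Q0")
        case A0: True
        show ?thesis
        proof (cases "B \<in> ?Q0")
          case True then show ?thesis using A0 AB partitionD'[OF Qp] by auto
        next
          case False
          then obtain C where C: "C \<in> T'" "B = lift C" using AB(2) by auto
          then obtain B' where "B' \<in> ?Q1" "v \<in> B'" using memlift AB(4) by blast
          then show ?thesis using A0 AB(3) partitionD'[OF Qp, of A B' v] by auto
        qed
      next
        case False
        then obtain C where C: "C \<in> T'" "A = lift C" using AB(1) by auto
        then obtain BA where BA: "BA \<in> ?Q1" "BA \<inter> Y \<subseteq> C" "v \<in> BA" using memlift AB(3) by blast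
        show ?thesis
        proof (cases "B \<in> ?Q0")
          case True then show ?thesis using BA AB(4) partitionD'[OF Qp, of B BA v] by auto
        next
          case False
          then obtain C' where C': "C' \<in> T'" "B = lift C'" using AB(2) by auto
          then obtain BB where BB: "BB \<in> ?Q1" "BB \<inter> Y \<subseteq> C'" "v \<in> BB" using memlift AB(4) by blast
          have "BA = BB" using partitionD'[OF Qp, of BA BB v] BA BB by auto
          then have "C \<inter> C' \<noteq> {}" using BA BB by auto
          then have "C = C'" using partitionD[OF T'p C(1) C'(1)] by auto
          then show ?thesis using C C' by simp
        qed
      qed
    qed
    have Tc: "coarsens ?T Q"
    proof (rule coarsensI)
      show "\<Union>?T = \<Union>Q"
      proof
        show "\<Union>?T \<subseteq> \<Union>Q" using liftQ by auto
        show "\<Union>Q \<subseteq> \<Union>?T"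
        proof
          fix v assume "v \<in> \<Union>Q"
          then obtain B where B: "B \<in> Q" "v \<in> B" by auto
          show "v \<in> \<Union>?T"
          proof (cases "B \<inter> Y = {}")
            case True then show ?thesis using B by auto
          next
            case False
            then obtain w where w: "w \<in> B \<inter> Y" by auto
            have "w \<in> \<Union>?QY" using w B by auto
            then have "w \<in> \<Union>T'" using coarsensD1[OF T'c] by simp
            then obtain C where C: "C \<in> T'" "w \<in> C" by auto
            obtain F where F: "F \<subseteq> ?QY" "C = \<Union>F" using coarsensD2[OF T'c C(1)] by blast
            then obtain D where D: "D \<in> F" "w \<in> D" using C(2) by auto
            then obtain B' where B': "B' \<in> ?Q1" "D = B' \<inter> Y" using F(1) by auto
            have "B' = B" using partitionD'[OF Qp, of B' B w] B' D w B by auto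
            then have "B \<inter> Y \<subseteq> C" using B' D F(2) by auto
            then have "B \<subseteq> lift C" using B False unfolding lift_def by auto
            then show ?thesis using C B by auto
          qed
        qed
      qed
    next
      fix A assume "A \<in> ?T"
      then show "\<exists>F\<subseteq>Q. A = \<Union>F"
      proof
        assume "A \<in> lift ` T'"
        then obtain C where "A = lift C" by auto
        then show ?thesis unfolding lift_def by (intro exI[of _ "{B\<in>?Q1. B \<inter> Y \<subseteq> C}"]) auto
      next
        assume "A \<in> ?Q0"
        then show ?thesis by (intro exI[of _ "{A}"]) auto
      qed
    qed
    define f where "f A m = (if A \<in> ?Q0 then 1 else f' (A \<inter> Y) (m |` (A \<inter> Y)))" for A m
    have fl: "f (lift C) m = f' C (m |` C)" if "C \<in> T'" for C m
      using disj0 that L1[OF that] unfolding f_def by auto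
    have f0: "f A m = 1" if "A \<in> ?Q0" for A m using that unfolding f_def by auto
    have Ta: "adm ?T f"
    proof -
      have nn: "\<forall>A\<in>?T. \<forall>m\<in>Mem A. 0 \<le> f A m"
      proof (intro ballI)
        fix A m assume "A \<in> ?T" "m \<in> Mem A"
        then show "0 \<le> f A m"
        proof (cases "A \<in> ?Q0")
          case False
          then obtain C where C: "C \<in> T'" "A = lift C" using \<open>A \<in> ?T\<close> by auto
          have "m |` C \<in> Mem C" using Mem_restrict[OF \<open>m \<in> Mem A\<close>] Csub[OF C(1)] C(2) by auto
          then show ?thesis using T'a C fl unfolding adm_def by auto
        qed (simp add: f0)
      qed
      have mono: "nondecr_on_Mem A (f A)" if "\<forall>C\<in>T'. nondecr_on_Mem C (f' C)" "A \<in> ?T" for A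
      proof (cases "A \<in> ?Q0")
        case True then show ?thesis unfolding nondecr_on_Mem_def using f0 by simp
      next
        case False
        then obtain C where C: "C \<in> T'" "A = lift C" using \<open>A \<in> ?T\<close> by auto
        show ?thesis unfolding nondecr_on_Mem_def
        proof (intro ballI impI)
          fix m m' assume "m \<in> Mem A" "m' \<in> Mem A" "mem_le A m m'"
          then have "m |` C \<in> Mem C" "m' |` C \<in> Mem C" "mem_le C (m |` C) (m' |` C)"
            using Mem_restrict mem_le_restrict Csub[OF C(1)] C(2) by auto
          then show "f A m \<le> f A m'" using that(1) C fl unfolding nondecr_on_Mem_def by auto
        qed
      qed
      have anti: "nonincr_on_Mem A (f A)" if "\<forall>C\<in>T'. nonincr_on_Mem C (f' C)" "A \<in> ?T" for A
      proof (cases "A \<in> ?Q0")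
        case True then show ?thesis unfolding nonincr_on_Mem_def using f0 by simp
      next
        case False
        then obtain C where C: "C \<in> T'" "A = lift C" using \<open>A \<in> ?T\<close> by auto
        show ?thesis unfolding nonincr_on_Mem_def
        proof (intro ballI impI)
          fix m m' assume "m \<in> Mem A" "m' \<in> Mem A" "mem_le A m m'"
          then have "m |` C \<in> Mem C" "m' |` C \<in> Mem C" "mem_le C (m |` C) (m' |` C)"
            using Mem_restrict mem_le_restrict Csub[OF C(1)] C(2) by auto
          then show "f A m' \<le> f A m" using that(1) C fl unfolding nonincr_on_Mem_def by auto
        qed
      qed
      show ?thesis unfolding adm_def using nn mono anti T'a unfolding adm_def by blast
    qed
    have decomp: "(\<Prod>A\<in>?T. \<Phi> A) = (\<Prod>C\<in>T'. \<Phi> (lift C)) * (\<Prod>A\<in>?Q0. \<Phi> A)" for \<Phi> :: "'a set \<Rightarrow> ennreal"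
      using prod.union_disjoint[of "lift ` T'" ?Q0 \<Phi>] finT' finQ disj0 prod.reindex[OF inj, of \<Phi>]
      by auto
    have e1: "(\<Prod>A\<in>?T. ennreal (f A (m |` A))) = (\<Prod>C\<in>T'. ennreal (f' C (m |` C)))" for m
    proof -
      have "(\<Prod>C\<in>T'. ennreal (f (lift C) (m |` lift C))) = (\<Prod>C\<in>T'. ennreal (f' C (m |` C)))"
      proof (rule prod.cong[OF refl])
        fix C assume C: "C \<in> T'"
        have "lift C \<inter> C = C" using Csub[OF C] by auto
        then show "ennreal (f (lift C) (m |` lift C)) = ennreal (f' C (m |` C))" using fl[OF C] by simp
      qed
      moreover have "(\<Prod>A\<in>?Q0. ennreal (f A (m |` A))) = 1" using f0 by simp
      ultimately show ?thesis using decomp by simp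
    qed
    have e2: "(\<Prod>A\<in>?T. \<integral>\<^sup>+ m. ennreal (f A (m |` A)) \<partial>measure_pmf \<mu>) = (\<Prod>C\<in>T'. \<integral>\<^sup>+ m. ennreal (f' C (m |` C)) \<partial>measure_pmf \<mu>)"
    proof -
      have "(\<Prod>C\<in>T'. \<integral>\<^sup>+ m. ennreal (f (lift C) (m |` lift C)) \<partial>measure_pmf \<mu>) = (\<Prod>C\<in>T'. \<integral>\<^sup>+ m. ennreal (f' C (m |` C)) \<partial>measure_pmf \<mu>)"
      proof (rule prod.cong[OF refl])
        fix C assume C: "C \<in> T'"
        have "lift C \<inter> C = C" using Csub[OF C] by auto
        then show "(\<integral>\<^sup>+ m. ennreal (f (lift C) (m |` lift C)) \<partial>measure_pmf \<mu>) = (\<integral>\<^sup>+ m. ennreal (f' C (m |` C)) \<partial>measure_pmf \<mu>)"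
          using fl[OF C] by simp
      qed
      moreover have "(\<Prod>A\<in>?Q0. \<integral>\<^sup>+ m. ennreal (f A (m |` A)) \<partial>measure_pmf \<mu>) = 1" using f0 by (simp add: nn_int_const_pmf)
      ultimately show ?thesis using decomp by simp
    qed
    show "(\<integral>\<^sup>+ m. (\<Prod>A\<in>T'. ennreal (f' A (m |` A))) \<partial>measure_pmf \<mu>)
          \<le> (\<Prod>A\<in>T'. \<integral>\<^sup>+ m. ennreal (f' A (m |` A)) \<partial>measure_pmf \<mu>)"
      using PNA_D[OF pna Tp Tc Ta] unfolding e1 e2 .
  qed
qed


lemma prod_mono_ennreal: "(\<And>i. i \<in> A \<Longrightarrow> f i \<le> g i) \<Longrightarrow> prod f A \<le> (prod g A :: ennreal)"
proof (induct A rule: infinite_finite_induct)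
  case (insert x F)
  then show ?case by (simp add: mult_mono)
qed simp_all

lemma SUP_mult_incseq:
  fixes f g :: "nat \<Rightarrow> ennreal"
  assumes f: "incseq f" and g: "incseq g"
  shows "(SUP i. f i * g i) = (SUP i. f i) * (SUP i. g i)"
proof (rule antisym)
  show "(SUP i. f i * g i) \<le> (SUP i. f i) * (SUP i. g i)"
    by (rule SUP_least) (intro mult_mono SUP_upper; simp)
  have "(SUP i. f i) * (SUP i. g i) = (SUP i. SUP j. f i * g j)"
    by (simp add: SUP_mult_left_ennreal SUP_mult_right_ennreal) (rule SUP_commute)
  also have "\<dots> \<le> (SUP i. f i * g i)"
  proof (intro SUP_least)
    fix i j
    have "f i * g j \<le> f (max i j) * g (max i j)"
      using f g by (intro mult_mono) (auto simp: incseq_def)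
    also have "\<dots> \<le> (SUP i. f i * g i)" by (rule SUP_upper) simp
    finally show "f i * g j \<le> (SUP i. f i * g i)" .
  qed
  finally show "(SUP i. f i) * (SUP i. g i) \<le> (SUP i. f i * g i)" .
qed

lemma SUP_prod_incseq:
  fixes u :: "nat \<Rightarrow> 'b \<Rightarrow> ennreal"
  assumes "finite T" "\<And>A. A \<in> T \<Longrightarrow> incseq (\<lambda>n. u n A)"
  shows "(SUP n. \<Prod>A\<in>T. u n A) = (\<Prod>A\<in>T. SUP n. u n A)"
  using assms
proof (induct T rule: finite_induct)
  case empty then show ?case by simp
next
  case (insert a T)
  have inc: "incseq (\<lambda>n. \<Prod>A\<in>T. u n A)"
    unfolding incseq_def
  proof (intro allI impI)
    fix m n :: nat assume "m \<le> n"
    then show "(\<Prod>A\<in>T. u m A) \<le> (\<Prod>A\<in>T. u n A)"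
      using insert(4) by (intro prod_mono_ennreal) (auto simp: incseq_def)
  qed
  have "(SUP n. \<Prod>A\<in>insert a T. u n A) = (SUP n. u n a * (\<Prod>A\<in>T. u n A))"
    using insert(1,2) by simp
  also have "\<dots> = (SUP n. u n a) * (SUP n. \<Prod>A\<in>T. u n A)"
    by (rule SUP_mult_incseq[OF insert(4)[of a] inc]) simp
  also have "\<dots> = (SUP n. u n a) * (\<Prod>A\<in>T. SUP n. u n A)"
    using insert by simp
  also have "\<dots> = (\<Prod>A\<in>insert a T. SUP n. u n A)" using insert(1,2) by simp
  finally show ?case .
qed

lemma SUP_min_nat: "(SUP n. min h (of_nat n)) = (h :: ennreal)"
proof (rule antisym)
  show "(SUP n. min h (of_nat n)) \<le> h" by (rule SUP_least) simp
  show "h \<le> (SUP n. min h (of_nat n))"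
  proof (cases "h = top")
    case True
    then have "(SUP n. min h (of_nat n)) = (SUP n. of_nat n :: ennreal)" by simp
    also have "\<dots> = top" by (rule ennreal_SUP_of_nat_eq_top)
    finally have "(SUP n. min h (of_nat n)) = top" .
    then show ?thesis by (metis top_greatest)
  next
    case False
    then have "h < top" by (simp add: top.not_eq_extremum)
    then obtain n where "h < of_nat n" using ennreal_Ex_less_of_nat by blast
    then have "min h (of_nat n) = h" by simp
    then show ?thesis by (metis SUP_upper UNIV_I)
  qed
qed

lemma incseq_min_nat: "incseq (\<lambda>n. min (h::ennreal) (of_nat n))"
  unfolding incseq_def by (intro allI impI min.mono) auto

lemma coarsen_restrict:
  assumes Tp: "is_partition T" and Tc: "coarsens T (P \<union> Q)" and PX: "\<Union>P \<subseteq> X" and QX: "\<Union>Q \<inter> X = {}"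
  shows "is_partition ((\<lambda>A. A \<inter> X) ` {A\<in>T. A \<inter> X \<noteq> {}})"
    "coarsens ((\<lambda>A. A \<inter> X) ` {A\<in>T. A \<inter> X \<noteq> {}}) P"
    "inj_on (\<lambda>A. A \<inter> X) {A\<in>T. A \<inter> X \<noteq> {}}"
proof -
  show "is_partition ((\<lambda>A. A \<inter> X) ` {A\<in>T. A \<inter> X \<noteq> {}})"
  proof (rule partitionI)
    fix A assume "A \<in> (\<lambda>A. A \<inter> X) ` {A\<in>T. A \<inter> X \<noteq> {}}" then show "A \<noteq> {}" by auto
  next
    fix A B v assume AB: "A \<in> (\<lambda>A. A \<inter> X) ` {A\<in>T. A \<inter> X \<noteq> {}}" "B \<in> (\<lambda>A. A \<inter> X) ` {A\<in>T. A \<inter> X \<noteq> {}}" "v \<in> A" "v \<in> B"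
    then obtain A' B' where "A' \<in> T" "B' \<in> T" "A = A' \<inter> X" "B = B' \<inter> X" by auto
    then show "A = B" using partitionD'[OF Tp, of A' B' v] AB(3,4) by auto
  qed
  show "inj_on (\<lambda>A. A \<inter> X) {A\<in>T. A \<inter> X \<noteq> {}}"
  proof (rule inj_onI)
    fix A B assume "A \<in> {A\<in>T. A \<inter> X \<noteq> {}}" "B \<in> {A\<in>T. A \<inter> X \<noteq> {}}" "A \<inter> X = B \<inter> X"
    then obtain v where "v \<in> A" "v \<in> B" "A \<in> T" "B \<in> T" by auto
    then show "A = B" using partitionD'[OF Tp] by blast
  qed
  show "coarsens ((\<lambda>A. A \<inter> X) ` {A\<in>T. A \<inter> X \<noteq> {}}) P"
  proof (rule coarsensI)
    have u: "\<Union>T = \<Union>P \<union> \<Union>Q" using coarsensD1[OF Tc] by simp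
    show "\<Union>((\<lambda>A. A \<inter> X) ` {A\<in>T. A \<inter> X \<noteq> {}}) = \<Union>P"
    proof
      show "\<Union>((\<lambda>A. A \<inter> X) ` {A\<in>T. A \<inter> X \<noteq> {}}) \<subseteq> \<Union>P"
      proof
        fix v assume "v \<in> \<Union>((\<lambda>A. A \<inter> X) ` {A\<in>T. A \<inter> X \<noteq> {}})"
        then obtain A where "A \<in> T" "v \<in> A" "v \<in> X" by auto
        then have "v \<in> \<Union>P \<union> \<Union>Q" using u by auto
        then show "v \<in> \<Union>P" using QX \<open>v \<in> X\<close> by auto
      qed
      show "\<Union>P \<subseteq> \<Union>((\<lambda>A. A \<inter> X) ` {A\<in>T. A \<inter> X \<noteq> {}})"
      proof
        fix v assume "v \<in> \<Union>P"
        then have "v \<in> \<Union>T" "v \<in> X" using u PX by auto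
        then obtain A where "A \<in> T" "v \<in> A" by auto
        then show "v \<in> \<Union>((\<lambda>A. A \<inter> X) ` {A\<in>T. A \<inter> X \<noteq> {}})" using \<open>v \<in> X\<close> by auto
      qed
    qed
  next
    fix C assume "C \<in> (\<lambda>A. A \<inter> X) ` {A\<in>T. A \<inter> X \<noteq> {}}"
    then obtain A where A: "A \<in> T" "C = A \<inter> X" by auto
    obtain F where F: "F \<subseteq> P \<union> Q" "A = \<Union>F" using coarsensD2[OF Tc A(1)] by blast
    have "C = \<Union>(F \<inter> P)"
    proof
      show "C \<subseteq> \<Union>(F \<inter> P)"
      proof
        fix v assume "v \<in> C"
        then have "v \<in> A" "v \<in> X" using A(2) by auto
        then obtain D where D: "D \<in> F" "v \<in> D" using F(2) by auto
        have "D \<notin> Q" using D(2) \<open>v \<in> X\<close> QX by auto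
        then have "D \<in> P" using D(1) F(1) by auto
        then show "v \<in> \<Union>(F \<inter> P)" using D by auto
      qed
      show "\<Union>(F \<inter> P) \<subseteq> C"
      proof
        fix v assume "v \<in> \<Union>(F \<inter> P)"
        then obtain D where D: "D \<in> F" "D \<in> P" "v \<in> D" by auto
        then have "v \<in> A" using F(2) by auto
        moreover have "v \<in> X" using D PX by auto
        ultimately show "v \<in> C" using A(2) by auto
      qed
    qed
    then show "\<exists>F\<subseteq>P. C = \<Union>F" by (intro exI[of _ "F \<inter> P"]) auto
  qed
qed


lemma PNA_family:
  fixes k :: "'v set \<Rightarrow> 'v set" and g :: "'v set \<Rightarrow> ('v \<rightharpoonup> real) \<Rightarrow> real" and T :: "'v set set"
  assumes pna: "PNA P \<mu>" and finT: "finite T"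
    and kp: "is_partition (k ` {A\<in>T. k A \<noteq> {}})" and kc: "coarsens (k ` {A\<in>T. k A \<noteq> {}}) P"
    and inj: "inj_on k {A\<in>T. k A \<noteq> {}}"
    and nn: "\<And>A c. A \<in> T \<Longrightarrow> c \<in> Mem (k A) \<Longrightarrow> 0 \<le> g A c"
    and mono: "(\<forall>A\<in>T. nondecr_on_Mem (k A) (g A)) \<or> (\<forall>A\<in>T. nonincr_on_Mem (k A) (g A))"
  shows "(\<integral>\<^sup>+ m. (\<Prod>A\<in>T. ennreal (g A (m |` k A))) \<partial>measure_pmf \<mu>)
     \<le> (\<Prod>A\<in>T. \<integral>\<^sup>+ m. ennreal (g A (m |` k A)) \<partial>measure_pmf \<mu>)"
proof -
  define T1 where "T1 = {A\<in>T. k A \<noteq> {}}"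
  define T0 where "T0 = {A\<in>T. k A = {}}"
  have TT: "T = T1 \<union> T0" "T1 \<inter> T0 = {}" "finite T1" "finite T0" using finT unfolding T1_def T0_def by auto
  define f where "f C c = g (inv_into T1 k C) c" for C c
  have iv: "inv_into T1 k (k A) = A" if "A \<in> T1" for A using inv_into_f_f[OF inj[folded T1_def] that] .
  have fk: "f (k A) c = g A c" if "A \<in> T1" for A c unfolding f_def iv[OF that] ..
  have adm: "adm (k ` T1) f"
    unfolding adm_def
  proof (intro conjI)
    show "\<forall>C\<in>k ` T1. \<forall>m\<in>Mem C. 0 \<le> f C m"
    proof (intro ballI)
      fix C m assume "C \<in> k ` T1" "m \<in> Mem C"
      then obtain A where A: "A \<in> T1" "C = k A" by auto
      then show "0 \<le> f C m" using fk[OF A(1)] nn \<open>m \<in> Mem C\<close> unfolding T1_def by auto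
    qed
    have m1: "nondecr_on_Mem C (f C)" if hh: "\<forall>A\<in>T. nondecr_on_Mem (k A) (g A)" "C \<in> k ` T1" for C
    proof -
      obtain A where A: "A \<in> T1" "C = k A" using hh(2) by auto
      then have "nondecr_on_Mem (k A) (g A)" using hh(1) unfolding T1_def by auto
      then show ?thesis using A fk[OF A(1)] unfolding nondecr_on_Mem_def by auto
    qed
    have m2: "nonincr_on_Mem C (f C)" if hh: "\<forall>A\<in>T. nonincr_on_Mem (k A) (g A)" "C \<in> k ` T1" for C
    proof -
      obtain A where A: "A \<in> T1" "C = k A" using hh(2) by auto
      then have "nonincr_on_Mem (k A) (g A)" using hh(1) unfolding T1_def by auto
      then show ?thesis using A fk[OF A(1)] unfolding nonincr_on_Mem_def by auto
    qed
    show "(\<forall>C\<in>k ` T1. nondecr_on_Mem C (f C)) \<or> (\<forall>C\<in>k ` T1. nonincr_on_Mem C (f C))"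
      using mono m1 m2 by blast
  qed
  have reidx: "(\<Prod>C\<in>k ` T1. \<Psi> C) = (\<Prod>A\<in>T1. \<Psi> (k A))" for \<Psi> :: "'v set \<Rightarrow> ennreal"
    using prod.reindex[OF inj[folded T1_def], of \<Psi>] by simp
  let ?G = "\<lambda>A m. ennreal (g A (m |` k A))"
  have I1: "(\<integral>\<^sup>+ m. (\<Prod>A\<in>T1. ?G A m) \<partial>measure_pmf \<mu>) \<le> (\<Prod>A\<in>T1. \<integral>\<^sup>+ m. ?G A m \<partial>measure_pmf \<mu>)"
  proof -
    have "(\<integral>\<^sup>+ m. (\<Prod>C\<in>k ` T1. ennreal (f C (m |` C))) \<partial>measure_pmf \<mu>)
       \<le> (\<Prod>C\<in>k ` T1. \<integral>\<^sup>+ m. ennreal (f C (m |` C)) \<partial>measure_pmf \<mu>)"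
      by (rule PNA_D[OF pna kp[folded T1_def] kc[folded T1_def] adm])
    moreover have "(\<Prod>C\<in>k ` T1. ennreal (f C (m |` C))) = (\<Prod>A\<in>T1. ?G A m)" for m
      unfolding reidx by (intro prod.cong refl) (simp add: fk)
    moreover have "(\<Prod>C\<in>k ` T1. \<integral>\<^sup>+ m. ennreal (f C (m |` C)) \<partial>measure_pmf \<mu>) = (\<Prod>A\<in>T1. \<integral>\<^sup>+ m. ?G A m \<partial>measure_pmf \<mu>)"
      unfolding reidx by (intro prod.cong refl) (simp add: fk)
    ultimately show ?thesis by simp
  qed
  define K where "K = (\<Prod>A\<in>T0. ennreal (g A Map.empty))"
  have G0: "?G A m = ennreal (g A Map.empty)" if "A \<in> T0" for A m using that unfolding T0_def by simp
  have split: "(\<Prod>A\<in>T. \<Phi> A) = (\<Prod>A\<in>T1. \<Phi> A) * (\<Prod>A\<in>T0. \<Phi> A)" for \<Phi> :: "'v set \<Rightarrow> ennreal"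
    unfolding TT(1) by (rule prod.union_disjoint[OF TT(3,4,2)])
  have "(\<integral>\<^sup>+ m. (\<Prod>A\<in>T. ?G A m) \<partial>measure_pmf \<mu>) = (\<integral>\<^sup>+ m. (\<Prod>A\<in>T1. ?G A m) * K \<partial>measure_pmf \<mu>)"
    unfolding split K_def by (intro nn_integral_cong arg_cong2[where f="(*)"] refl prod.cong) (simp add: G0)
  also have "\<dots> = (\<integral>\<^sup>+ m. (\<Prod>A\<in>T1. ?G A m) \<partial>measure_pmf \<mu>) * K"
    by (rule nn_integral_multc) simp
  also have "\<dots> \<le> (\<Prod>A\<in>T1. \<integral>\<^sup>+ m. ?G A m \<partial>measure_pmf \<mu>) * K"
    by (rule mult_right_mono[OF I1]) simp
  also have "\<dots> = (\<Prod>A\<in>T. \<integral>\<^sup>+ m. ?G A m \<partial>measure_pmf \<mu>)"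
    unfolding split K_def by (intro arg_cong2[where f="(*)"] refl prod.cong) (simp add: G0 nn_int_const_pmf)
  finally show ?thesis .
qed


lemma M1: "dom a = X \<Longrightarrow> dom d = A \<inter> Y \<Longrightarrow> A \<subseteq> X \<union> Y \<Longrightarrow> (a ++ d) |` A \<in> Mem A"
  unfolding Mem_def by auto
lemma M2: "dom b = Y \<Longrightarrow> (a ++ (b |` (A \<inter> Y))) |` A = (a ++ b) |` A"
  by (rule ext) (auto simp: map_add_def restrict_map_def split: option.split)
lemma M3: "dom d = A \<inter> Y \<Longrightarrow> dom d' = A \<inter> Y \<Longrightarrow> mem_le (A \<inter> Y) d d' \<Longrightarrow> mem_le A ((a ++ d) |` A) ((a ++ d') |` A)"
  unfolding mem_le_def
proof (intro ballI)
  fix v assume h: "dom d = A \<inter> Y" "dom d' = A \<inter> Y" "\<forall>x\<in>A \<inter> Y. the (d x) \<le> the (d' x)" "v \<in> A"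
  show "the (((a ++ d) |` A) v) \<le> the (((a ++ d') |` A) v)"
  proof (cases "v \<in> Y")
    case True
    then have "v \<in> dom d" "v \<in> dom d'" using h by auto
    then obtain r r' where rr: "d v = Some r" "d' v = Some r'" by auto
    have "the (d v) \<le> the (d' v)" using h(3) h(4) True by auto
    then show ?thesis using rr h(4) by (simp add: map_add_def)
  next
    case False
    then have "v \<notin> dom d" "v \<notin> dom d'" using h by auto
    then have "d v = None" "d' v = None" by auto
    then show ?thesis using h by (simp add: map_add_def)
  qed
qed
lemma M1': "dom c = A \<inter> X \<Longrightarrow> dom b = Y \<Longrightarrow> A \<subseteq> X \<union> Y \<Longrightarrow> (c ++ b) |` A \<in> Mem A"
  unfolding Mem_def by auto
lemma M2': "dom b = Y \<Longrightarrow> A \<subseteq> X \<union> Y \<Longrightarrow> ((a |` (A \<inter> X)) ++ b) |` A = (a ++ b) |` A"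
  by (rule ext) (auto simp: map_add_def restrict_map_def split: option.split)
lemma M3': "dom b = Y \<Longrightarrow> A \<subseteq> X \<union> Y \<Longrightarrow> mem_le (A \<inter> X) c c' \<Longrightarrow> mem_le A ((c ++ b) |` A) ((c' ++ b) |` A)"
  unfolding mem_le_def by (auto simp: map_add_def split: option.split)

lemma int_pprod: "(\<integral>\<^sup>+ m. F m \<partial>measure_pmf (pprod x y)) = (\<integral>\<^sup>+ a. \<integral>\<^sup>+ b. F (a ++ b) \<partial>measure_pmf y \<partial>measure_pmf x)"
  unfolding pprod_def by (simp add: nn_integral_pair_pmf')

lemma PNA_pprod:
  assumes x: "x \<in> Xcar" and y: "y \<in> Xcar" and disj: "ddom x \<inter> ddom y = {}"
    and pP: "PNA P x" and pQ: "PNA Q y"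
  shows "PNA (P \<union> Q) (pprod x y)"
proof -
  define X where "X = ddom x"
  define Y where "Y = ddom y"
  have XY: "X \<inter> Y = {}" using disj unfolding X_def Y_def .
  have Pp: "is_partition P" and PX: "\<Union>P \<subseteq> X" using PNA_D2[OF pP] unfolding X_def by auto
  have Qp: "is_partition Q" and QY: "\<Union>Q \<subseteq> Y" using PNA_D2[OF pQ] unfolding Y_def by auto
  have domx: "dom a = X" if "a \<in> set_pmf x" for a using Dist_D[OF XcarD[OF x] that] unfolding X_def .
  have domy: "dom b = Y" if "b \<in> set_pmf y" for b using Dist_D[OF XcarD[OF y] that] unfolding Y_def .
  have dp: "ddom (pprod x y) = X \<union> Y" using pprod_Xcar[OF x y] unfolding X_def Y_def by simp
  have finXY: "finite (X \<union> Y)" using XcarD2[OF x] XcarD2[OF y] unfolding X_def Y_def by simp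
  have PQp: "is_partition (P \<union> Q)"
  proof (rule partitionI)
    fix A assume "A \<in> P \<union> Q" then show "A \<noteq> {}" using partition_ne[OF Pp] partition_ne[OF Qp] by auto
  next
    fix A B v assume AB: "A \<in> P \<union> Q" "B \<in> P \<union> Q" "v \<in> A" "v \<in> B"
    show "A = B"
    proof (cases "A \<in> P")
      case True
      show ?thesis
      proof (cases "B \<in> P")
        case True then show ?thesis using \<open>A \<in> P\<close> AB partitionD'[OF Pp] by blast
      next
        case False
        then have "B \<in> Q" using AB by simp
        then have "v \<in> Y" using AB(4) QY by auto
        moreover have "v \<in> X" using True AB(3) PX by auto
        ultimately show ?thesis using XY by auto
      qed
    next
      case False
      then have AQ: "A \<in> Q" using AB by simp
      show ?thesis
      proof (cases "B \<in> P")
        case True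
        then have "v \<in> X" using AB(4) PX by auto
        moreover have "v \<in> Y" using AQ AB(3) QY by auto
        ultimately show ?thesis using XY by auto
      next
        case False
        then have "B \<in> Q" using AB by simp
        then show ?thesis using AQ AB partitionD'[OF Qp] by blast
      qed
    qed
  qed
  show ?thesis unfolding PNA_alt
  proof (intro conjI allI impI)
    show "is_partition (P \<union> Q)" by fact
    show "\<Union>(P \<union> Q) \<subseteq> ddom (pprod x y)" using PX QY dp by auto
    fix T f assume "is_partition T \<and> coarsens T (P \<union> Q) \<and> adm T f"
    then have Tp: "is_partition T" and Tc: "coarsens T (P \<union> Q)" and Ta: "adm T f" by auto
    have uT: "\<Union>T = \<Union>P \<union> \<Union>Q" using coarsensD1[OF Tc] by simp
    have "\<Union>T \<subseteq> X \<union> Y" using uT PX QY by auto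
    then have "finite (\<Union>T)" using finXY by (rule finite_subset)
    then have finT: "finite T" by (rule partition_finite[OF Tp])
    have AXY: "A \<subseteq> X \<union> Y" if "A \<in> T" for A using that \<open>\<Union>T \<subseteq> X \<union> Y\<close> by blast
    have fnn: "0 \<le> f A m" if "A \<in> T" "m \<in> Mem A" for A m using Ta that unfolding adm_def by simp
    have Tc': "coarsens T (Q \<union> P)" using Tc by (simp add: Un_commute)
    have PY: "\<Union>P \<inter> Y = {}" using PX XY by auto
    have QX: "\<Union>Q \<inter> X = {}" using QY XY by auto
    note Yr = coarsen_restrict[OF Tp Tc' QY PY]
    note Xr = coarsen_restrict[OF Tp Tc PX QX]
    let ?F = "\<lambda>A m. ennreal (f A (m |` A))"
    have step1: "(\<integral>\<^sup>+ b. (\<Prod>A\<in>T. ?F A (a ++ b)) \<partial>measure_pmf y) \<le> (\<Prod>A\<in>T. \<integral>\<^sup>+ b. ?F A (a ++ b) \<partial>measure_pmf y)"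
      if a: "a \<in> set_pmf x" for a
    proof -
      have da: "dom a = X" using domx[OF a] .
      have nn: "0 \<le> f A ((a ++ d) |` A)" if "A \<in> T" "d \<in> Mem (A \<inter> Y)" for A d
        using fnn[OF that(1) M1[OF da _ AXY[OF that(1)]]] that(2) by (simp add: Mem_def)
      have mono: "(\<forall>A\<in>T. nondecr_on_Mem (A \<inter> Y) (\<lambda>d. f A ((a ++ d) |` A))) \<or>
                  (\<forall>A\<in>T. nonincr_on_Mem (A \<inter> Y) (\<lambda>d. f A ((a ++ d) |` A)))"
      proof -
        have m1: "nondecr_on_Mem (A \<inter> Y) (\<lambda>d. f A ((a ++ d) |` A))" if "nondecr_on_Mem A (f A)" "A \<in> T" for A
          unfolding nondecr_on_Mem_def
        proof (intro ballI impI)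
          fix d d' assume dd: "d \<in> Mem (A \<inter> Y)" "d' \<in> Mem (A \<inter> Y)" "mem_le (A \<inter> Y) d d'"
          have "dom d = A \<inter> Y" "dom d' = A \<inter> Y" using dd by (auto simp: Mem_def)
          then show "f A ((a ++ d) |` A) \<le> f A ((a ++ d') |` A)"
            using that(1) M1[OF da _ AXY[OF that(2)]] M3 dd(3) unfolding nondecr_on_Mem_def by blast
        qed
        have m2: "nonincr_on_Mem (A \<inter> Y) (\<lambda>d. f A ((a ++ d) |` A))" if "nonincr_on_Mem A (f A)" "A \<in> T" for A
          unfolding nonincr_on_Mem_def
        proof (intro ballI impI)
          fix d d' assume dd: "d \<in> Mem (A \<inter> Y)" "d' \<in> Mem (A \<inter> Y)" "mem_le (A \<inter> Y) d d'"
          have "dom d = A \<inter> Y" "dom d' = A \<inter> Y" using dd by (auto simp: Mem_def)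
          then show "f A ((a ++ d') |` A) \<le> f A ((a ++ d) |` A)"
            using that(1) M1[OF da _ AXY[OF that(2)]] M3 dd(3) unfolding nonincr_on_Mem_def by blast
        qed
        show ?thesis using Ta m1 m2 unfolding adm_def by blast
      qed
      have "(\<integral>\<^sup>+ m. (\<Prod>A\<in>T. ennreal (f A ((a ++ (m |` (A \<inter> Y))) |` A))) \<partial>measure_pmf y)
          \<le> (\<Prod>A\<in>T. \<integral>\<^sup>+ m. ennreal (f A ((a ++ (m |` (A \<inter> Y))) |` A)) \<partial>measure_pmf y)"
        by (rule PNA_family[OF pQ finT Yr(1) Yr(2) Yr(3), of "\<lambda>A d. f A ((a ++ d) |` A)"])
           (use nn mono in auto)
      moreover have "(\<integral>\<^sup>+ m. (\<Prod>A\<in>T. ennreal (f A ((a ++ (m |` (A \<inter> Y))) |` A))) \<partial>measure_pmf y)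
          = (\<integral>\<^sup>+ b. (\<Prod>A\<in>T. ?F A (a ++ b)) \<partial>measure_pmf y)"
        by (rule nn_int_cong_pmf) (simp add: M2[OF domy])
      moreover have "(\<Prod>A\<in>T. \<integral>\<^sup>+ m. ennreal (f A ((a ++ (m |` (A \<inter> Y))) |` A)) \<partial>measure_pmf y)
          = (\<Prod>A\<in>T. \<integral>\<^sup>+ b. ?F A (a ++ b) \<partial>measure_pmf y)"
        by (intro prod.cong refl nn_int_cong_pmf) (simp add: M2[OF domy])
      ultimately show ?thesis by simp
    qed
    define h where "h A a = (\<integral>\<^sup>+ b. ?F A (a ++ b) \<partial>measure_pmf y)" for A a
    \<comment> \<open>Step 2: outer integral over x, via truncation\<close>
    have trunc: "(\<integral>\<^sup>+ a. (\<Prod>A\<in>T. min (h A a) (of_nat n)) \<partial>measure_pmf x) \<le> (\<Prod>A\<in>T. \<integral>\<^sup>+ a. h A a \<partial>measure_pmf x)" for n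
    proof -
      define g where "g A c = enn2real (min (\<integral>\<^sup>+ b. ?F A (c ++ b) \<partial>measure_pmf y) (of_nat n))" for A c
      have fin: "min z (of_nat n) < (top::ennreal)" for z by (rule le_less_trans[OF min.cobounded2]) (simp add: of_nat_less_top)
      have gmono: "g A c \<le> g A c'" if "(\<integral>\<^sup>+ b. ?F A (c ++ b) \<partial>measure_pmf y) \<le> (\<integral>\<^sup>+ b. ?F A (c' ++ b) \<partial>measure_pmf y)" for A c c'
        unfolding g_def by (rule enn2real_mono[OF min.mono[OF that order_refl] fin])
      have mono: "(\<forall>A\<in>T. nondecr_on_Mem (A \<inter> X) (g A)) \<or> (\<forall>A\<in>T. nonincr_on_Mem (A \<inter> X) (g A))"
      proof -
        have m1: "nondecr_on_Mem (A \<inter> X) (g A)" if "nondecr_on_Mem A (f A)" "A \<in> T" for A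
          unfolding nondecr_on_Mem_def
        proof (intro ballI impI gmono nn_int_mono_pmf ennreal_leI)
          fix c c' b assume cc: "c \<in> Mem (A \<inter> X)" "c' \<in> Mem (A \<inter> X)" "mem_le (A \<inter> X) c c'" and b: "b \<in> set_pmf y"
          have "dom c = A \<inter> X" "dom c' = A \<inter> X" using cc by (auto simp: Mem_def)
          then show "f A ((c ++ b) |` A) \<le> f A ((c' ++ b) |` A)"
            using that(1) M1'[OF _ domy[OF b] AXY[OF that(2)]] M3'[OF domy[OF b] AXY[OF that(2)] cc(3)]
            unfolding nondecr_on_Mem_def by blast
        qed
        have m2: "nonincr_on_Mem (A \<inter> X) (g A)" if "nonincr_on_Mem A (f A)" "A \<in> T" for A
          unfolding nonincr_on_Mem_def
        proof (intro ballI impI gmono nn_int_mono_pmf ennreal_leI)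
          fix c c' b assume cc: "c \<in> Mem (A \<inter> X)" "c' \<in> Mem (A \<inter> X)" "mem_le (A \<inter> X) c c'" and b: "b \<in> set_pmf y"
          have "dom c = A \<inter> X" "dom c' = A \<inter> X" using cc by (auto simp: Mem_def)
          then show "f A ((c' ++ b) |` A) \<le> f A ((c ++ b) |` A)"
            using that(1) M1'[OF _ domy[OF b] AXY[OF that(2)]] M3'[OF domy[OF b] AXY[OF that(2)] cc(3)]
            unfolding nonincr_on_Mem_def by blast
        qed
        show ?thesis using Ta m1 m2 unfolding adm_def by blast
      qed
      have pw: "ennreal (g A (a |` (A \<inter> X))) = min (h A a) (of_nat n)" if "a \<in> set_pmf x" "A \<in> T" for A a
      proof -
        have "(\<integral>\<^sup>+ b. ?F A ((a |` (A \<inter> X)) ++ b) \<partial>measure_pmf y) = h A a"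
          unfolding h_def by (rule nn_int_cong_pmf) (simp add: M2'[OF domy AXY[OF that(2)]])
        then show ?thesis unfolding g_def using fin by simp
      qed
      have "(\<integral>\<^sup>+ m. (\<Prod>A\<in>T. ennreal (g A (m |` (A \<inter> X)))) \<partial>measure_pmf x)
          \<le> (\<Prod>A\<in>T. \<integral>\<^sup>+ m. ennreal (g A (m |` (A \<inter> X))) \<partial>measure_pmf x)"
        by (rule PNA_family[OF pP finT Xr(1) Xr(2) Xr(3), of g]) (use mono in \<open>auto simp: g_def\<close>)
      moreover have "(\<integral>\<^sup>+ m. (\<Prod>A\<in>T. ennreal (g A (m |` (A \<inter> X)))) \<partial>measure_pmf x)
          = (\<integral>\<^sup>+ a. (\<Prod>A\<in>T. min (h A a) (of_nat n)) \<partial>measure_pmf x)"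
        by (intro nn_int_cong_pmf prod.cong refl) (simp add: pw)
      moreover have "(\<Prod>A\<in>T. \<integral>\<^sup>+ m. ennreal (g A (m |` (A \<inter> X))) \<partial>measure_pmf x)
          = (\<Prod>A\<in>T. \<integral>\<^sup>+ a. min (h A a) (of_nat n) \<partial>measure_pmf x)"
        by (intro prod.cong refl nn_int_cong_pmf) (simp add: pw)
      moreover have "(\<Prod>A\<in>T. \<integral>\<^sup>+ a. min (h A a) (of_nat n) \<partial>measure_pmf x) \<le> (\<Prod>A\<in>T. \<integral>\<^sup>+ a. h A a \<partial>measure_pmf x)"
        by (intro prod_mono_ennreal nn_integral_mono) simp
      ultimately show ?thesis by simp
    qed
    have step2: "(\<integral>\<^sup>+ a. (\<Prod>A\<in>T. h A a) \<partial>measure_pmf x) \<le> (\<Prod>A\<in>T. \<integral>\<^sup>+ a. h A a \<partial>measure_pmf x)"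
    proof -
      have "(\<Prod>A\<in>T. h A a) = (SUP n. \<Prod>A\<in>T. min (h A a) (of_nat n))" for a
        using SUP_prod_incseq[OF finT, of "\<lambda>n A. min (h A a) (of_nat n)"] incseq_min_nat
        by (simp add: SUP_min_nat)
      then have "(\<integral>\<^sup>+ a. (\<Prod>A\<in>T. h A a) \<partial>measure_pmf x) = (\<integral>\<^sup>+ a. (SUP n. \<Prod>A\<in>T. min (h A a) (of_nat n)) \<partial>measure_pmf x)"
        by simp
      also have "\<dots> = (SUP n. \<integral>\<^sup>+ a. (\<Prod>A\<in>T. min (h A a) (of_nat n)) \<partial>measure_pmf x)"
      proof (rule nn_integral_monotone_convergence_SUP)
        show "incseq (\<lambda>n a. \<Prod>A\<in>T. min (h A a) (of_nat n))"
          unfolding incseq_def le_fun_def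
          by (intro allI impI prod_mono_ennreal min.mono) auto
      qed simp
      also have "\<dots> \<le> (\<Prod>A\<in>T. \<integral>\<^sup>+ a. h A a \<partial>measure_pmf x)" by (rule SUP_least) (rule trunc)
      finally show ?thesis .
    qed
    have "(\<integral>\<^sup>+ m. (\<Prod>A\<in>T. ?F A m) \<partial>measure_pmf (pprod x y))
        = (\<integral>\<^sup>+ a. \<integral>\<^sup>+ b. (\<Prod>A\<in>T. ?F A (a ++ b)) \<partial>measure_pmf y \<partial>measure_pmf x)"
      by (rule int_pprod)
    also have "\<dots> \<le> (\<integral>\<^sup>+ a. (\<Prod>A\<in>T. h A a) \<partial>measure_pmf x)"
      unfolding h_def by (rule nn_int_mono_pmf) (rule step1)
    also have "\<dots> \<le> (\<Prod>A\<in>T. \<integral>\<^sup>+ a. h A a \<partial>measure_pmf x)" by (rule step2)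
    also have "\<dots> = (\<Prod>A\<in>T. \<integral>\<^sup>+ m. ?F A m \<partial>measure_pmf (pprod x y))"
      unfolding h_def int_pprod ..
    finally show "(\<integral>\<^sup>+ m. (\<Prod>A\<in>T. ?F A m) \<partial>measure_pmf (pprod x y)) \<le> (\<Prod>A\<in>T. \<integral>\<^sup>+ m. ?F A m \<partial>measure_pmf (pprod x y))" .
  qed
qed


definition eunit :: "('v \<rightharpoonup> real) pmf" where "eunit = return_pmf Map.empty"

lemma eunit_Dist: "eunit \<in> Dist {}" unfolding eunit_def Dist_def Mem_def by simp
lemma eunit_ddom: "ddom eunit = {}" by (rule Dist_ddom[OF eunit_Dist])
lemma eunit_Xcar: "eunit \<in> Xcar" "ddom eunit = {}"
  using eunit_Dist eunit_ddom unfolding Xcar_def by auto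

lemma pprod_eunit: "pprod eunit x = x"
  unfolding pprod_def eunit_def pair_return_pmf1 map_pmf_comp by simp

lemma tensor_Xcar: assumes "x \<in> Xcar" "y \<in> Xcar" shows "tensor x y \<subseteq> Xcar"
proof (cases "ddom x \<inter> ddom y = {}")
  case True
  then show ?thesis using tensor_eq[OF XcarD[OF assms(1)] XcarD[OF assms(2)]] pprod_Xcar[OF assms] by simp
next
  case False then show ?thesis unfolding tensor_def by simp
qed

lemma tensorE: assumes "z \<in> tensor x y" "x \<in> Xcar" "y \<in> Xcar"
  shows "ddom x \<inter> ddom y = {}" "z = pprod x y"
proof -
  show d: "ddom x \<inter> ddom y = {}" using assms(1) unfolding tensor_def by (auto split: if_splits)
  show "z = pprod x y" using assms(1) tensor_eq[OF XcarD[OF assms(2)] XcarD[OF assms(3)] d] by simp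
qed

lemma tensor_pprod: "x \<in> Xcar \<Longrightarrow> y \<in> Xcar \<Longrightarrow> ddom x \<inter> ddom y = {} \<Longrightarrow> pprod x y \<in> tensor x y"
proof -
  assume a: "x \<in> Xcar" "y \<in> Xcar" "ddom x \<inter> ddom y = {}"
  show ?thesis using tensor_eq[OF XcarD[OF a(1)] XcarD[OF a(2)] a(3)] by simp
qed

lemma pprod_assoc:
  assumes x: "x \<in> Dist X" and y: "y \<in> Dist Y" and z: "z \<in> Dist Z"
    and d: "X \<inter> Y = {}" "X \<inter> Z = {}" "Y \<inter> Z = {}"
  shows "pprod (pprod x y) z = pprod x (pprod y z)"
proof (rule pmf_eqI)
  fix m
  have xy: "pprod x y \<in> Dist (X \<union> Y)" by (rule pprod_Dist[OF x y])
  have yz: "pprod y z \<in> Dist (Y \<union> Z)" by (rule pprod_Dist[OF y z])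
  have l: "pprod (pprod x y) z \<in> Dist (X \<union> Y \<union> Z)" by (rule pprod_Dist[OF xy z])
  have r: "pprod x (pprod y z) \<in> Dist (X \<union> Y \<union> Z)" using pprod_Dist[OF x yz] by (simp add: Un_assoc)
  show "pmf (pprod (pprod x y) z) m = pmf (pprod x (pprod y z)) m"
  proof (cases "m \<in> Mem (X \<union> Y \<union> Z)")
    case True
    have m1: "m |` (X \<union> Y) \<in> Mem (X \<union> Y)" using Mem_restrict[OF True] by auto
    have m2: "m |` (Y \<union> Z) \<in> Mem (Y \<union> Z)" using Mem_restrict[OF True] by auto
    have e1: "(X \<union> Y) \<inter> X = X" "(X \<union> Y) \<inter> Y = Y" "(Y \<union> Z) \<inter> Y = Y" "(Y \<union> Z) \<inter> Z = Z" by auto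
    have "pmf (pprod (pprod x y) z) m = pmf (pprod x y) (m |` (X \<union> Y)) * pmf z (m |` Z)"
      using pmf_pprod[OF xy z _ True] d by auto
    also have "\<dots> = pmf x (m |` X) * pmf y (m |` Y) * pmf z (m |` Z)"
      using pmf_pprod[OF x y d(1) m1] by (simp add: e1)
    also have "\<dots> = pmf x (m |` X) * pmf (pprod y z) (m |` (Y \<union> Z))"
      using pmf_pprod[OF y z d(3) m2] by (simp add: e1)
    also have "\<dots> = pmf (pprod x (pprod y z)) m"
      using pmf_pprod[OF x yz _, of m] d True by (simp add: Un_assoc Int_Un_distrib)
    finally show ?thesis .
  next
    case False
    then have "m \<notin> set_pmf (pprod (pprod x y) z)" "m \<notin> set_pmf (pprod x (pprod y z))"
      using l r unfolding Dist_def by auto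
    then show ?thesis by (simp add: set_pmf_eq)
  qed
qed

lemma tensor_frame: "BI_frame (Xcar :: ('v \<rightharpoonup> real) pmf set) dle tensor Xcar"
  unfolding BI_frame_def
proof (intro conjI ballI impI)
  show "dle x x" if "x \<in> Xcar" for x using dle_refl[OF that] .
  show "dle x z" if "x \<in> Xcar" "y \<in> Xcar" "z \<in> Xcar" "dle x y" "dle y z" for x y z
    using dle_trans that by blast
  show "tensor x y \<subseteq> Xcar" if "x \<in> Xcar" "y \<in> Xcar" for x y using tensor_Xcar[OF that] .
  show "Xcar \<subseteq> Xcar" ..
next
  fix x y z x' y' :: "('v \<rightharpoonup> real) pmf" assume a: "x \<in> Xcar" "y \<in> Xcar" "z \<in> Xcar" "x' \<in> Xcar" "y' \<in> Xcar"
    "z \<in> tensor x y" "dle x' x" "dle y' y"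
  have d: "ddom x \<inter> ddom y = {}" and zz: "z = pprod x y" using tensorE[OF a(6) a(1,2)] by auto
  have s: "ddom x' \<subseteq> ddom x" "ddom y' \<subseteq> ddom y" and mx: "marg (ddom x') x = x'" and my: "marg (ddom y') y = y'"
    using a(7,8) unfolding dle_def by auto
  have d': "ddom x' \<inter> ddom y' = {}" using d s by auto
  let ?z = "pprod x' y'"
  have zm: "marg (ddom x' \<union> ddom y') z = ?z"
    unfolding zz using marg_pprod[OF XcarD[OF a(1)] XcarD[OF a(2)] d s] mx my by simp
  have zX: "?z \<in> Xcar" and zd: "ddom ?z = ddom x' \<union> ddom y'" using pprod_Xcar[OF a(4,5)] by auto
  have "dle ?z z" unfolding dle_def zd using zm s zz pprod_Xcar[OF a(1,2)] by auto
  then show "\<exists>z'\<in>Xcar. dle z' z \<and> z' \<in> tensor x' y'" using zX tensor_pprod[OF a(4,5) d'] by blast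
next
  fix x y z :: "('v \<rightharpoonup> real) pmf" assume a: "x \<in> Xcar" "y \<in> Xcar" "z \<in> Xcar" "z \<in> tensor x y"
  then show "z \<in> tensor y x" unfolding tensor_def
    by (auto split: if_splits simp: Un_commute Int_commute mult.commute)
next
  fix x y z t w :: "('v \<rightharpoonup> real) pmf" assume a: "x \<in> Xcar" "y \<in> Xcar" "z \<in> Xcar" "t \<in> Xcar" "w \<in> Xcar"
    "w \<in> tensor t z" "t \<in> tensor x y"
  have dxy: "ddom x \<inter> ddom y = {}" and tt: "t = pprod x y" using tensorE[OF a(7) a(1,2)] by auto
  have dtz: "ddom t \<inter> ddom z = {}" and ww: "w = pprod t z" using tensorE[OF a(6) a(4,3)] by auto
  have dt: "ddom t = ddom x \<union> ddom y" using tt pprod_Xcar[OF a(1,2)] by simp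
  have dyz: "ddom y \<inter> ddom z = {}" "ddom x \<inter> ddom z = {}" using dtz dt by auto
  let ?s = "pprod y z"
  have sX: "?s \<in> Xcar" and sd: "ddom ?s = ddom y \<union> ddom z" using pprod_Xcar[OF a(2,3)] by auto
  have "w = pprod x ?s" unfolding ww tt
    by (rule pprod_assoc[OF XcarD[OF a(1)] XcarD[OF a(2)] XcarD[OF a(3)] dxy dyz(2) dyz(1)])
  moreover have "ddom x \<inter> ddom ?s = {}" using sd dxy dyz by auto
  ultimately have "w \<in> tensor x ?s" using tensor_pprod[OF a(1) sX] by simp
  then show "\<exists>s\<in>Xcar. s \<in> tensor y z \<and> w \<in> tensor x s" using sX tensor_pprod[OF a(2,3) dyz(1)] by blast
next
  fix x :: "('v \<rightharpoonup> real) pmf" assume a: "x \<in> Xcar"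
  have "ddom eunit \<inter> ddom x = {}" unfolding eunit_ddom by (rule Int_empty_left)
  then have "pprod eunit x \<in> tensor eunit x" by (rule tensor_pprod[OF eunit_Xcar(1) a])
  then have "x \<in> tensor eunit x" unfolding pprod_eunit .
  then show "\<exists>e\<in>Xcar. x \<in> tensor e x" using eunit_Xcar(1) by blast
next
  fix e x y :: "('v \<rightharpoonup> real) pmf" assume a: "e \<in> Xcar" "x \<in> Xcar" "y \<in> Xcar" "x \<in> tensor y e"
  have d: "ddom y \<inter> ddom e = {}" and xx: "x = pprod y e" using tensorE[OF a(4) a(3,1)] by auto
  show "dle y x" unfolding dle_def xx using pprod_Xcar[OF a(3,1)] marg_pprod1[OF XcarD[OF a(3)] XcarD[OF a(1)] d] by simp
next
  fix e e' :: "('v \<rightharpoonup> real) pmf" assume "e \<in> Xcar" "e' \<in> Xcar" "dle e e'"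
  then show "e' \<in> Xcar" by simp
qed


lemma noplus_iff: "z \<in> noplus x y \<longleftrightarrow> ddom x \<inter> ddom y = {} \<and> z \<in> Dist (ddom x \<union> ddom y) \<and>
   marg (ddom x) z = x \<and> marg (ddom y) z = y \<and> (\<forall>P Q. PNA P x \<longrightarrow> PNA Q y \<longrightarrow> PNA (P \<union> Q) z)"
proof (cases "ddom x \<inter> ddom y = {}")
  case True
  have "(\<forall>P Q. is_partition P \<and> \<Union>P \<subseteq> ddom x \<and> is_partition Q \<and> \<Union>Q \<subseteq> ddom y \<and>
               PNA P x \<and> PNA Q y \<longrightarrow> PNA (P \<union> Q) z) \<longleftrightarrow> (\<forall>P Q. PNA P x \<longrightarrow> PNA Q y \<longrightarrow> PNA (P \<union> Q) z)"
  proof (intro iffI allI impI)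
    fix P Q assume h: "\<forall>P Q. is_partition P \<and> \<Union>P \<subseteq> ddom x \<and> is_partition Q \<and> \<Union>Q \<subseteq> ddom y \<and>
               PNA P x \<and> PNA Q y \<longrightarrow> PNA (P \<union> Q) z" and p: "PNA P x" "PNA Q y"
    have "is_partition P \<and> \<Union>P \<subseteq> ddom x \<and> is_partition Q \<and> \<Union>Q \<subseteq> ddom y \<and> PNA P x \<and> PNA Q y"
      using PNA_D2[OF p(1)] PNA_D2[OF p(2)] p by simp
    then show "PNA (P \<union> Q) z" using spec[OF spec[OF h, of P], of Q] by (rule mp[rotated])
  next
    fix P Q assume h: "\<forall>P Q. PNA P x \<longrightarrow> PNA Q y \<longrightarrow> PNA (P \<union> Q) z"
      and p: "is_partition P \<and> \<Union>P \<subseteq> ddom x \<and> is_partition Q \<and> \<Union>Q \<subseteq> ddom y \<and> PNA P x \<and> PNA Q y"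
    then show "PNA (P \<union> Q) z" by simp
  qed
  then show ?thesis unfolding noplus_def using True by simp
next
  case False then show ?thesis unfolding noplus_def by simp
qed

lemma partition_union: "is_partition P \<Longrightarrow> is_partition Q \<Longrightarrow> \<Union>P \<inter> \<Union>Q = {} \<Longrightarrow> is_partition (P \<union> Q)"
proof -
  assume a: "is_partition P" "is_partition Q" "\<Union>P \<inter> \<Union>Q = {}"
  show ?thesis
  proof (rule partitionI)
    fix A assume "A \<in> P \<union> Q" then show "A \<noteq> {}" using partition_ne[OF a(1)] partition_ne[OF a(2)] by auto
  next
    fix A B v assume AB: "A \<in> P \<union> Q" "B \<in> P \<union> Q" "v \<in> A" "v \<in> B"
    have nPQ: False if "C \<in> P" "D \<in> Q" "v \<in> C" "v \<in> D" for C D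
    proof -
      have "v \<in> \<Union>P" "v \<in> \<Union>Q" using that by auto
      then show False using a(3) by auto
    qed
    show "A = B"
    proof (cases "A \<in> P")
      case True
      show ?thesis
      proof (cases "B \<in> P")
        case True then show ?thesis using \<open>A \<in> P\<close> AB partitionD'[OF a(1)] by blast
      next
        case False then have "B \<in> Q" using AB by simp
        then show ?thesis using nPQ[OF \<open>A \<in> P\<close> _ AB(3) AB(4)] by blast
      qed
    next
      case False
      then have AQ: "A \<in> Q" using AB by simp
      show ?thesis
      proof (cases "B \<in> P")
        case True then show ?thesis using nPQ[OF True AQ AB(4) AB(3)] by blast
      next
        case False then have "B \<in> Q" using AB by simp
        then show ?thesis using AQ AB partitionD'[OF a(2)] by blast
      qed
    qed
  qed
qed

lemma coarsens_split:
  assumes "\<Union>Q \<subseteq> Y \<union> Z"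
  shows "coarsens (P \<union> Q) ((P \<union> (\<lambda>B. B \<inter> Y) ` {B\<in>Q. B \<inter> Y \<noteq> {}}) \<union> (\<lambda>B. B \<inter> Z) ` {B\<in>Q. B \<inter> Z \<noteq> {}})"
    (is "coarsens _ (?P \<union> ?QY \<union> ?QZ)")
proof (rule coarsensI)
  have uy: "\<Union>?QY = \<Union>Q \<inter> Y" by auto
  have uz: "\<Union>?QZ = \<Union>Q \<inter> Z" by auto
  show "\<Union>(P \<union> Q) = \<Union>(?P \<union> ?QY \<union> ?QZ)"
    unfolding Union_Un_distrib uy uz using assms by auto
next
  fix A assume "A \<in> P \<union> Q"
  then show "\<exists>F\<subseteq>?P \<union> ?QY \<union> ?QZ. A = \<Union>F"
  proof
    assume "A \<in> P" then show ?thesis by (intro exI[of _ "{A}"]) auto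
  next
    assume AQ: "A \<in> Q"
    let ?F = "{D \<in> ?QY \<union> ?QZ. D \<subseteq> A}"
    have "A \<subseteq> \<Union>?F"
    proof
      fix v assume "v \<in> A"
      then have "v \<in> Y \<or> v \<in> Z" using assms AQ by auto
      then show "v \<in> \<Union>?F"
      proof
        assume "v \<in> Y"
        then have "A \<inter> Y \<in> ?QY" using AQ \<open>v \<in> A\<close> by auto
        then have F: "A \<inter> Y \<in> ?F" by auto
        have "v \<in> A \<inter> Y" using \<open>v \<in> A\<close> \<open>v \<in> Y\<close> by simp
        then show ?thesis using F by (rule UnionI[rotated])
      next
        assume "v \<in> Z"
        then have "A \<inter> Z \<in> ?QZ" using AQ \<open>v \<in> A\<close> by auto
        then have F: "A \<inter> Z \<in> ?F" by auto
        have "v \<in> A \<inter> Z" using \<open>v \<in> A\<close> \<open>v \<in> Z\<close> by simp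
        then show ?thesis using F by (rule UnionI[rotated])
      qed
    qed
    moreover have "\<Union>?F \<subseteq> A" by auto
    ultimately have "A = \<Union>?F" by (rule antisym)
    moreover have "?F \<subseteq> ?P \<union> ?QY \<union> ?QZ" by auto
    ultimately show ?thesis by blast
  qed
qed


lemma noplus_Xcar: "x \<in> Xcar \<Longrightarrow> y \<in> Xcar \<Longrightarrow> z \<in> noplus x y \<Longrightarrow> z \<in> Xcar \<and> ddom z = ddom x \<union> ddom y"
proof -
  assume a: "x \<in> Xcar" "y \<in> Xcar" "z \<in> noplus x y"
  have d: "z \<in> Dist (ddom x \<union> ddom y)" using a(3) unfolding noplus_iff by simp
  have "finite (ddom x \<union> ddom y)" using XcarD2[OF a(1)] XcarD2[OF a(2)] by simp
  then show ?thesis using d Dist_ddom[OF d] unfolding Xcar_def by blast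
qed

lemma noplus_frame: "BI_frame (Xcar :: ('v \<rightharpoonup> real) pmf set) dle noplus Xcar"
  unfolding BI_frame_def
proof (intro conjI ballI impI)
  show "dle x x" if "x \<in> Xcar" for x :: "('v \<rightharpoonup> real) pmf" using dle_refl[OF that] .
  show "dle x z" if "x \<in> Xcar" "y \<in> Xcar" "z \<in> Xcar" "dle x y" "dle y z" for x y z :: "('v \<rightharpoonup> real) pmf"
    using dle_trans that by blast
  show "noplus x y \<subseteq> Xcar" if "x \<in> Xcar" "y \<in> Xcar" for x y :: "('v \<rightharpoonup> real) pmf" using noplus_Xcar[OF that] by blast
  show "Xcar \<subseteq> (Xcar :: ('v \<rightharpoonup> real) pmf set)" ..
next
  fix x y z x' y' :: "('v \<rightharpoonup> real) pmf" assume a: "x \<in> Xcar" "y \<in> Xcar" "z \<in> Xcar" "x' \<in> Xcar" "y' \<in> Xcar"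
    "z \<in> noplus x y" "dle x' x" "dle y' y"
  have zi: "ddom x \<inter> ddom y = {}" "z \<in> Dist (ddom x \<union> ddom y)" "marg (ddom x) z = x" "marg (ddom y) z = y"
    "\<And>P Q. PNA P x \<Longrightarrow> PNA Q y \<Longrightarrow> PNA (P \<union> Q) z" using a(6) unfolding noplus_iff by auto
  have dz: "ddom z = ddom x \<union> ddom y" using Dist_ddom[OF zi(2)] .
  have s: "ddom x' \<subseteq> ddom x" "ddom y' \<subseteq> ddom y" and mx: "marg (ddom x') x = x'" and my: "marg (ddom y') y = y'"
    using a(7,8) unfolding dle_def by auto
  let ?D = "ddom x' \<union> ddom y'"
  let ?z = "marg ?D z"
  have Dsub: "?D \<subseteq> ddom z" using s dz by auto
  have zX: "?z \<in> Xcar" and zd: "ddom ?z = ?D" using Xcar_marg[OF a(3), of ?D] Dsub by auto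
  have le: "dle ?z z" by (rule dle_marg[OF a(3) Dsub])
  have "?z \<in> noplus x' y'" unfolding noplus_iff
  proof (intro conjI allI impI)
    show "ddom x' \<inter> ddom y' = {}" using zi(1) s by auto
    show "?z \<in> Dist ?D" using XcarD[OF zX] zd by simp
    have "?D \<inter> ddom x' = ddom x'" "ddom x \<inter> ddom x' = ddom x'" using s by auto
    then have "marg (ddom x') ?z = marg (ddom x') (marg (ddom x) z)"
      unfolding marg_marg by simp
    then show "marg (ddom x') ?z = x'" using zi(3) mx by simp
    have "?D \<inter> ddom y' = ddom y'" "ddom y \<inter> ddom y' = ddom y'" using s by auto
    then have "marg (ddom y') ?z = marg (ddom y') (marg (ddom y) z)"
      unfolding marg_marg by simp
    then show "marg (ddom y') ?z = y'" using zi(4) my by simp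
    fix P Q assume pP: "PNA P x'" and pQ: "PNA Q y'"
    have "\<Union>P \<subseteq> ddom x'" "\<Union>Q \<subseteq> ddom y'" using PNA_D2[OF pP] PNA_D2[OF pQ] by auto
    then have "PNA P x" "PNA Q y"
      using PNA_marg_iff[OF a(1) s(1), of P] PNA_marg_iff[OF a(2) s(2), of Q] pP pQ mx my by auto
    then have "PNA (P \<union> Q) z" by (rule zi(5))
    moreover have "\<Union>(P \<union> Q) \<subseteq> ?D" using \<open>\<Union>P \<subseteq> ddom x'\<close> \<open>\<Union>Q \<subseteq> ddom y'\<close> by auto
    ultimately show "PNA (P \<union> Q) ?z" using PNA_marg_iff[OF a(3) Dsub] by simp
  qed
  then show "\<exists>z'\<in>Xcar. dle z' z \<and> z' \<in> noplus x' y'" using zX le by blast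
next
  fix x y z :: "('v \<rightharpoonup> real) pmf" assume a: "x \<in> Xcar" "y \<in> Xcar" "z \<in> Xcar" "z \<in> noplus x y"
  have zi: "ddom x \<inter> ddom y = {}" "z \<in> Dist (ddom x \<union> ddom y)" "marg (ddom x) z = x" "marg (ddom y) z = y"
    "\<And>P Q. PNA P x \<Longrightarrow> PNA Q y \<Longrightarrow> PNA (P \<union> Q) z" using a(4) unfolding noplus_iff by auto
  show "z \<in> noplus y x" unfolding noplus_iff
  proof (intro conjI allI impI)
    show "ddom y \<inter> ddom x = {}" using zi(1) by auto
    show "z \<in> Dist (ddom y \<union> ddom x)" using zi(2) by (simp add: Un_commute)
    show "marg (ddom y) z = y" "marg (ddom x) z = x" using zi by auto
    fix P Q assume "PNA P y" "PNA Q x"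
    then have "PNA (Q \<union> P) z" using zi(5) by blast
    then show "PNA (P \<union> Q) z" by (simp add: Un_commute)
  qed
next
  fix x y z t w :: "('v \<rightharpoonup> real) pmf" assume a: "x \<in> Xcar" "y \<in> Xcar" "z \<in> Xcar" "t \<in> Xcar" "w \<in> Xcar"
    "w \<in> noplus t z" "t \<in> noplus x y"
  have ti: "ddom x \<inter> ddom y = {}" "t \<in> Dist (ddom x \<union> ddom y)" "marg (ddom x) t = x" "marg (ddom y) t = y"
    "\<And>P Q. PNA P x \<Longrightarrow> PNA Q y \<Longrightarrow> PNA (P \<union> Q) t" using a(7) unfolding noplus_iff by auto
  have dt: "ddom t = ddom x \<union> ddom y" using Dist_ddom[OF ti(2)] .
  have wi: "ddom t \<inter> ddom z = {}" "w \<in> Dist (ddom t \<union> ddom z)" "marg (ddom t) w = t" "marg (ddom z) w = z"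
    "\<And>P Q. PNA P t \<Longrightarrow> PNA Q z \<Longrightarrow> PNA (P \<union> Q) w" using a(6) unfolding noplus_iff by auto
  have dw: "ddom w = ddom x \<union> ddom y \<union> ddom z" using Dist_ddom[OF wi(2)] dt by simp
  define X where "X = ddom x"
  define Y where "Y = ddom y"
  define Z where "Z = ddom z"
  have dxy: "X \<inter> Y = {}" "X \<inter> Z = {}" "Y \<inter> Z = {}" using ti(1) wi(1) dt unfolding X_def Y_def Z_def by auto
  let ?s = "marg (Y \<union> Z) w"
  have YZsub: "Y \<union> Z \<subseteq> ddom w" using dw unfolding Y_def Z_def by auto
  have sX: "?s \<in> Xcar" and sd: "ddom ?s = Y \<union> Z" using Xcar_marg[OF a(5), of "Y \<union> Z"] YZsub by auto
  have mY: "marg Y w = y"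
  proof -
    have "marg Y w = marg Y (marg (ddom t) w)" unfolding marg_marg dt Y_def by (simp add: Int_absorb1)
    then show ?thesis using wi(3) ti(4) unfolding Y_def by simp
  qed
  have mX: "marg X w = x"
  proof -
    have "marg X w = marg X (marg (ddom t) w)" unfolding marg_marg dt X_def by (simp add: Int_absorb1)
    then show ?thesis using wi(3) ti(3) unfolding X_def by simp
  qed
  have mZ: "marg Z w = z" using wi(4) unfolding Z_def .
  have PNA_w: "PNA P w \<longleftrightarrow> PNA P (marg D w)" if "D \<subseteq> ddom w" "\<Union>P \<subseteq> D" for P D
    using PNA_marg_iff[OF a(5) that] by simp
  have sn: "?s \<in> noplus y z" unfolding noplus_iff
  proof (intro conjI allI impI)
    show "ddom y \<inter> ddom z = {}" using dxy(3) unfolding Y_def Z_def .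
    show "?s \<in> Dist (ddom y \<union> ddom z)" using XcarD[OF sX] sd unfolding Y_def Z_def by simp
    show "marg (ddom y) ?s = y" using mY unfolding marg_marg Y_def by (simp add: Int_absorb2)
    show "marg (ddom z) ?s = z" using mZ unfolding marg_marg Z_def by (simp add: Int_absorb2)
    fix P Q assume pP: "PNA P y" and pQ: "PNA Q z"
    have "PNA ({} \<union> P) t" by (rule ti(5)[OF PNA_empty[OF a(1)] pP])
    then have "PNA (P \<union> Q) w" using wi(5) pQ by simp
    moreover have "\<Union>(P \<union> Q) \<subseteq> Y \<union> Z" using PNA_D2[OF pP] PNA_D2[OF pQ] unfolding Y_def Z_def by auto
    ultimately show "PNA (P \<union> Q) ?s" using PNA_w[OF YZsub] by simp
  qed
  have wn: "w \<in> noplus x ?s" unfolding noplus_iff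
  proof (intro conjI allI impI)
    show "ddom x \<inter> ddom ?s = {}" using dxy sd unfolding X_def by auto
    show "w \<in> Dist (ddom x \<union> ddom ?s)" using wi(2) dt sd unfolding X_def Y_def Z_def by (simp add: Un_assoc)
    show "marg (ddom x) w = x" using mX unfolding X_def .
    show "marg (ddom ?s) w = ?s" using sd by simp
    fix P Q assume pP: "PNA P x" and pQ: "PNA Q ?s"
    have PX: "\<Union>P \<subseteq> X" and Pp: "is_partition P" using PNA_D2[OF pP] unfolding X_def by auto
    have QYZ: "\<Union>Q \<subseteq> Y \<union> Z" and Qp: "is_partition Q" using PNA_D2[OF pQ] sd by auto
    have Qw: "PNA Q w" using pQ PNA_w[OF YZsub QYZ] by simp
    let ?QY = "(\<lambda>B. B \<inter> Y) ` {B\<in>Q. B \<inter> Y \<noteq> {}}"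
    let ?QZ = "(\<lambda>B. B \<inter> Z) ` {B\<in>Q. B \<inter> Z \<noteq> {}}"
    have QYw: "PNA ?QY w" by (rule PNA_split[OF Qw a(5)])
    have QZw: "PNA ?QZ w" by (rule PNA_split[OF Qw a(5)])
    have "\<Union>?QY \<subseteq> Y" by auto
    then have QYy: "PNA ?QY y" using QYw PNA_w[of Y ?QY] dw mY unfolding Y_def by auto
    have "\<Union>?QZ \<subseteq> Z" by auto
    then have QZz: "PNA ?QZ z" using QZw PNA_w[of Z ?QZ] dw mZ unfolding Z_def by auto
    have "PNA (P \<union> ?QY) t" by (rule ti(5)[OF pP QYy])
    then have big: "PNA (P \<union> ?QY \<union> ?QZ) w" by (rule wi(5)[OF _ QZz])
    have "\<Union>P \<inter> \<Union>Q = {}" using PX QYZ dxy by auto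
    then have PQp: "is_partition (P \<union> Q)" by (rule partition_union[OF Pp Qp])
    show "PNA (P \<union> Q) w" by (rule PNA_coarsen[OF big PQp coarsens_split[OF QYZ]])
  qed
  show "\<exists>s\<in>Xcar. s \<in> noplus y z \<and> w \<in> noplus x s" using sX sn wn by blast
next
  fix x :: "('v \<rightharpoonup> real) pmf" assume a: "x \<in> Xcar"
  have "x \<in> noplus eunit x" unfolding noplus_iff eunit_ddom
  proof (intro conjI allI impI)
    show "{} \<inter> ddom x = {}" by simp
    show "x \<in> Dist ({} \<union> ddom x)" using XcarD[OF a] by simp
    show "marg {} x = eunit" unfolding marg_def eunit_def by simp
    show "marg (ddom x) x = x" using marg_self[OF XcarD[OF a]] .
    fix P Q :: "'v set set" assume h: "PNA P (eunit :: ('v \<rightharpoonup> real) pmf)" "PNA Q x"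
    have "is_partition P" "\<Union>P \<subseteq> ddom (eunit :: ('v \<rightharpoonup> real) pmf)" using PNA_D2[OF h(1)] by auto
    then have "is_partition P" "\<Union>P = {}" unfolding eunit_ddom by auto
    then have "P = {}" by (rule partition_empty_only)
    then show "PNA (P \<union> Q) x" using h(2) by simp
  qed
  then show "\<exists>e\<in>Xcar. x \<in> noplus e x" using eunit_Xcar(1) by blast
next
  fix e x y :: "('v \<rightharpoonup> real) pmf" assume a: "e \<in> Xcar" "x \<in> Xcar" "y \<in> Xcar" "x \<in> noplus y e"
  have "x \<in> Dist (ddom y \<union> ddom e)" "marg (ddom y) x = y" using a(4) unfolding noplus_iff by auto
  then show "dle y x" unfolding dle_def using Dist_ddom by auto
next
  fix e e' :: "('v \<rightharpoonup> real) pmf" assume "e \<in> Xcar" "e' \<in> Xcar" "dle e e'"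
  then show "e' \<in> Xcar" by simp
qed

theorem mainTheorem9:
  shows "M_BI_frame {1::nat, 2} (\<le>) (Xcar :: ('v \<rightharpoonup> real) pmf set) dle
           (\<lambda>i. if i = 1 then tensor else noplus) (\<lambda>i. Xcar)"
  unfolding M_BI_frame_def
proof (intro conjI ballI impI subsetI)
  fix m :: nat assume "m \<in> {1, 2}"
  then show "BI_frame (Xcar :: ('v \<rightharpoonup> real) pmf set) dle (if m = 1 then tensor else noplus) Xcar"
    using tensor_frame noplus_frame by auto
next
  fix m1 m2 :: nat and x y z :: "('v \<rightharpoonup> real) pmf"
  assume m: "m1 \<in> {1, 2}" "m2 \<in> {1, 2}" "m1 \<le> m2" and xy: "x \<in> Xcar" "y \<in> Xcar"
    and z: "z \<in> (if m1 = 1 then tensor else noplus) x y"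
  show "z \<in> (if m2 = 1 then tensor else noplus) x y"
  proof (cases "m1 = m2")
    case True then show ?thesis using z by simp
  next
    case False
    then have mm: "m1 = 1" "m2 = 2" using m by auto
    then have zt: "z \<in> tensor x y" using z by simp
    have d: "ddom x \<inter> ddom y = {}" and zz: "z = pprod x y" using tensorE[OF zt xy] by auto
    have "z \<in> noplus x y" unfolding noplus_iff zz
    proof (intro conjI allI impI)
      show "ddom x \<inter> ddom y = {}" by fact
      show "pprod x y \<in> Dist (ddom x \<union> ddom y)" by (rule pprod_Dist[OF XcarD[OF xy(1)] XcarD[OF xy(2)]])
      show "marg (ddom x) (pprod x y) = x" by (rule marg_pprod1[OF XcarD[OF xy(1)] XcarD[OF xy(2)] d])
      show "marg (ddom y) (pprod x y) = y" by (rule marg_pprod2[OF XcarD[OF xy(1)] XcarD[OF xy(2)] d])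
      fix P Q assume "PNA P x" "PNA Q y"
      then show "PNA (P \<union> Q) (pprod x y)" by (rule PNA_pprod[OF xy d])
    qed
    then show ?thesis using mm by simp
  qed
qed


end
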